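(* Let $A,D\in\mathbb{B}(\mathcal{H})$ and $T=\begin{bmatrix}A&0\\0&D\end{bmatrix}\in\mathbb{B}(\mathcal{H}\oplus\mathcal{H})$. Let $f,g$ be non-negative continuous functions on $[0,\infty)$ with $f(t)g(t)=t$ for all $t\ge0$. Let $p,q>1$ with $\frac1p+\frac1q=1$ and let $r>0$ satisfy $r\min(p,q)\ge2$. Then for every non-negative, nondecreasing, convex function $h$ on $[0,\infty)$, \[ h\big(w^r(T)\big)\le\max\left(\left\|\tfrac1p h\big(f^{pr}(|A|)\big)+\tfrac1q h\big(g^{qr}(|A^*|)\big)\right\|,\ \left\|\tfrac1p h\big(f^{pr}(|D|)\big)+\tfrac1q h\big(g^{qr}(|D^*|)\big)\right\|\right). \]
   Context: $\mathcal{H}$ is a complex Hilbert space; $w(X)=\sup\{|\langle Xx,x\rangle|:\|x\|=1\}$ is the numerical radius; $|X|=(X^*X)^{1/2}$; $f^{s}(|X|)$ denotes $(f(|X|))^s$, and all functions of positive operators are defined by continuous functional calculus; $\|\cdot\|$ is the operator norm. *)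

theory Defs
  imports "HOL-Analysis.Analysis" "HOL-Computational_Algebra.Polynomial"
begin

text \<open>A complex Hilbert space is a
  type of class complex_inner that is also a complete_space.\<close>

class complex_inner = real_normed_vector +
  fixes scaleC :: "complex \<Rightarrow> 'a \<Rightarrow> 'a"
    and cinner :: "'a \<Rightarrow> 'a \<Rightarrow> complex"
  assumes scaleC_add_right: "scaleC c (x + y) = scaleC c x + scaleC c y"
    and scaleC_add_left: "scaleC (b + c) x = scaleC b x + scaleC c x"
    and scaleC_scaleC: "scaleC b (scaleC c x) = scaleC (b * c) x"
    and scaleC_one: "scaleC 1 x = x"
    and scaleR_scaleC: "scaleR r x = scaleC (complex_of_real r) x"
    and cinner_commute: "cinner x y = cnj (cinner y x)"
    and cinner_add_right: "cinner x (y + z) = cinner x y + cinner x z"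
    and cinner_scaleC_right: "cinner x (scaleC c y) = c * cinner x y"
    and cinner_self_real: "Im (cinner x x) = 0"
    and cinner_self_nonneg: "0 \<le> Re (cinner x x)"
    and norm_eq_sqrt_cinner: "norm x = sqrt (Re (cinner x x))"

instantiation complex :: complex_inner
begin
definition scaleC_complex :: "complex \<Rightarrow> complex \<Rightarrow> complex" where
  "scaleC_complex c z = c * z"
definition cinner_complex :: "complex \<Rightarrow> complex \<Rightarrow> complex" where
  "cinner_complex z w = cnj z * w"
instance
proof
  fix x y z b c :: complex and r :: real
  show "scaleC c (x + y) = scaleC c x + scaleC c y" by (simp add: scaleC_complex_def algebra_simps)
  show "scaleC (b + c) x = scaleC b x + scaleC c x" by (simp add: scaleC_complex_def algebra_simps)
  show "scaleC b (scaleC c x) = scaleC (b * c) x" by (simp add: scaleC_complex_def algebra_simps)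
  show "scaleC 1 x = x" by (simp add: scaleC_complex_def)
  show "r *\<^sub>R x = scaleC (complex_of_real r) x" by (simp add: scaleC_complex_def scaleR_conv_of_real)
  show "cinner x y = cnj (cinner y x)" by (simp add: cinner_complex_def mult.commute)
  show "cinner x (y + z) = cinner x y + cinner x z" by (simp add: cinner_complex_def algebra_simps)
  show "cinner x (scaleC c y) = c * cinner x y" by (simp add: cinner_complex_def scaleC_complex_def algebra_simps)
  show "Im (cinner x x) = 0" by (simp add: cinner_complex_def)
  show "0 \<le> Re (cinner x x)" by (simp add: cinner_complex_def)
  show "norm x = sqrt (Re (cinner x x))"
    by (simp add: cinner_complex_def cmod_def power2_eq_square)
qed
end

text \<open>The Hilbert direct sum H \<oplus> H, realised on the product type (whose norm in
  HOL-Analysis is already sqrt (norm a ^ 2 + norm b ^ 2)).\<close>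
instantiation prod :: (complex_inner, complex_inner) complex_inner
begin
definition scaleC_prod :: "complex \<Rightarrow> 'a \<times> 'b \<Rightarrow> 'a \<times> 'b" where
  "scaleC_prod c x = (scaleC c (fst x), scaleC c (snd x))"
definition cinner_prod :: "'a \<times> 'b \<Rightarrow> 'a \<times> 'b \<Rightarrow> complex" where
  "cinner_prod x y = cinner (fst x) (fst y) + cinner (snd x) (snd y)"
instance
proof
  fix x y z :: "'a \<times> 'b" and b c :: complex and r :: real
  show "scaleC c (x + y) = scaleC c x + scaleC c y"
    by (simp add: scaleC_prod_def scaleC_add_right)
  show "scaleC (b + c) x = scaleC b x + scaleC c x"
    by (simp add: scaleC_prod_def scaleC_add_left)
  show "scaleC b (scaleC c x) = scaleC (b * c) x"
    by (simp add: scaleC_prod_def scaleC_scaleC)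
  show "scaleC 1 x = x" by (simp add: scaleC_prod_def scaleC_one)
  show "r *\<^sub>R x = scaleC (complex_of_real r) x"
    by (simp add: scaleC_prod_def scaleR_scaleC scaleR_prod_def)
  show "cinner x y = cnj (cinner y x)"
    by (simp add: cinner_prod_def cinner_commute[of "fst x"] cinner_commute[of "snd x"])
  show "cinner x (y + z) = cinner x y + cinner x z"
    by (simp add: cinner_prod_def cinner_add_right)
  show "cinner x (scaleC c y) = c * cinner x y"
    by (simp add: cinner_prod_def scaleC_prod_def cinner_scaleC_right algebra_simps)
  show "Im (cinner x x) = 0" by (simp add: cinner_prod_def cinner_self_real)
  show "0 \<le> Re (cinner x x)" by (simp add: cinner_prod_def cinner_self_nonneg add_nonneg_nonneg)
  show "norm x = sqrt (Re (cinner x x))"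
    using cinner_self_nonneg[of "fst x"] cinner_self_nonneg[of "snd x"]
    by (simp add: norm_prod_def cinner_prod_def norm_eq_sqrt_cinner)
qed
end

definition bounded_clinear :: "('a::complex_inner \<Rightarrow> 'b::complex_inner) \<Rightarrow> bool" where
  "bounded_clinear X \<longleftrightarrow> bounded_linear X \<and> (\<forall>c x. X (scaleC c x) = scaleC c (X x))"

definition adj :: "('a::complex_inner \<Rightarrow> 'a) \<Rightarrow> ('a \<Rightarrow> 'a)" where
  "adj X = (THE Y. \<forall>x y. cinner (X x) y = cinner x (Y y))"

definition numerical_radius :: "('a::complex_inner \<Rightarrow> 'a) \<Rightarrow> real" where
  "numerical_radius X = Sup {cmod (cinner (X x) x) | x. norm x = 1}"

definition poly_op :: "real poly \<Rightarrow> ('a::complex_inner \<Rightarrow> 'a) \<Rightarrow> ('a \<Rightarrow> 'a)" where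
  "poly_op p P = (\<lambda>x. \<Sum>i\<le>degree p. coeff p i *\<^sub>R (P ^^ i) x)"

text \<open>Continuous functional calculus for a positive operator P: f(P) is the operator-norm
  limit of p_n(P) for any sequence of real polynomials p_n converging uniformly to f on
  [0, ||P||] (which contains the spectrum of P).\<close>
definition cfc :: "(real \<Rightarrow> real) \<Rightarrow> ('a::complex_inner \<Rightarrow> 'a) \<Rightarrow> ('a \<Rightarrow> 'a)" where
  "cfc f P = (THE X. bounded_linear X \<and>
     (\<forall>ps :: nat \<Rightarrow> real poly.
        (\<forall>e>0. \<exists>N. \<forall>n\<ge>N. \<forall>t\<in>{0..onorm P}. \<bar>poly (ps n) t - f t\<bar> < e) \<longrightarrow>
        (\<lambda>n. onorm (\<lambda>x. poly_op (ps n) P x - X x)) \<longlonglongrightarrow> 0))"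

definition absop :: "('a::complex_inner \<Rightarrow> 'a) \<Rightarrow> ('a \<Rightarrow> 'a)" where
  "absop X = cfc sqrt (adj X \<circ> X)"

text \<open>f^s(|X|) = (f(|X|))^s.\<close>
definition fpow_abs :: "(real \<Rightarrow> real) \<Rightarrow> real \<Rightarrow> ('a::complex_inner \<Rightarrow> 'a) \<Rightarrow> ('a \<Rightarrow> 'a)" where
  "fpow_abs f s X = cfc (\<lambda>t. t powr s) (cfc f (absop X))"

definition diag_op :: "('a::complex_inner \<Rightarrow> 'a) \<Rightarrow> ('a \<Rightarrow> 'a) \<Rightarrow> ('a \<times> 'a \<Rightarrow> 'a \<times> 'a)" where
  "diag_op A D = (\<lambda>(x, y). (A x, D y))"

end

theory Submission
  imports Defs
begin

lemma cinner_zero_right [simp]: "cinner x (0::'a::complex_inner) = 0"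
  using cinner_add_right[of x "0::'a" 0] by simp

lemma cinner_zero_left [simp]: "cinner (0::'a::complex_inner) x = 0"
  by (subst cinner_commute) simp

lemma cinner_add_left: "cinner (x + y) (z::'a::complex_inner) = cinner x z + cinner y z"
  by (subst (1 2 3) cinner_commute) (simp add: cinner_add_right)

lemma cinner_scaleC_left: "cinner (scaleC c x) (y::'a::complex_inner) = cnj c * cinner x y"
  by (subst (1 2) cinner_commute) (simp add: cinner_scaleC_right)

lemma cinner_scaleR_right: "cinner x (r *\<^sub>R (y::'a::complex_inner)) = of_real r * cinner x y"
  by (simp add: scaleR_scaleC cinner_scaleC_right)

lemma cinner_scaleR_left: "cinner (r *\<^sub>R x) (y::'a::complex_inner) = of_real r * cinner x y"
  by (simp add: scaleR_scaleC cinner_scaleC_left)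

lemma cinner_minus_right: "cinner x (- (y::'a::complex_inner)) = - cinner x y"
  using cinner_scaleR_right[of x "-1" y] by simp

lemma cinner_minus_left: "cinner (- x) (y::'a::complex_inner) = - cinner x y"
  using cinner_scaleR_left[of "-1" x y] by simp

lemma cinner_diff_right: "cinner x (y - (z::'a::complex_inner)) = cinner x y - cinner x z"
  using cinner_add_right[of x y "-z"] by (simp add: cinner_minus_right)

lemma cinner_diff_left: "cinner (x - y) (z::'a::complex_inner) = cinner x z - cinner y z"
  using cinner_add_left[of x "-y" z] by (simp add: cinner_minus_left)

lemma cinner_sum_right: "cinner x (\<Sum>i\<in>I. f i) = (\<Sum>i\<in>I. cinner (x::'a::complex_inner) (f i))"
  by (induction I rule: infinite_finite_induct) (auto simp: cinner_add_right)

lemma cinner_sum_left: "cinner (\<Sum>i\<in>I. f i) x = (\<Sum>i\<in>I. cinner (f i) (x::'a::complex_inner))"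
  by (induction I rule: infinite_finite_induct) (auto simp: cinner_add_left)

lemmas cinner_simps = cinner_add_left cinner_add_right cinner_diff_left cinner_diff_right
  cinner_scaleR_left cinner_scaleR_right cinner_scaleC_left cinner_scaleC_right
  cinner_minus_left cinner_minus_right

lemma cinner_self: "cinner x (x::'a::complex_inner) = of_real ((norm x)\<^sup>2)"
proof -
  have "(norm x)\<^sup>2 = Re (cinner x x)"
    using norm_eq_sqrt_cinner[of x] cinner_self_nonneg[of x] by simp
  then show ?thesis using cinner_self_real[of x] by (simp add: complex_eq_iff)
qed

lemma Re_cinner_self: "Re (cinner x (x::'a::complex_inner)) = (norm x)\<^sup>2"
  by (simp add: cinner_self)

lemma cinner_self_eq_0 [simp]: "cinner x x = 0 \<longleftrightarrow> x = (0::'a::complex_inner)"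
  by (simp add: cinner_self)

lemma cinner_cnj_commute: "cnj (cinner x (y::'a::complex_inner)) = cinner y x"
  by (subst cinner_commute) simp

lemma cinner_ext: assumes "\<And>z. cinner z x = cinner z (y::'a::complex_inner)" shows "x = y"
proof -
  have "cinner (x - y) (x - y) = 0" using assms[of "x-y"] by (simp add: cinner_diff_right)
  then show ?thesis by simp
qed

lemma Cauchy_Schwarz_c: "cmod (cinner x (y::'a::complex_inner)) \<le> norm x * norm y"
proof (cases "y = 0")
  case True then show ?thesis by simp
next
  case False
  define t where "t = cinner y x / cinner y y"
  have ny: "cinner y y = of_real ((norm y)\<^sup>2)" by (rule cinner_self)
  have npos: "norm y > 0" using False by simp
  have "cinner (x - scaleC t y) (x - scaleC t y) =
      cinner x x - t * cinner x y - cnj t * cinner y x + cnj t * t * cinner y y"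
    by (simp add: cinner_simps algebra_simps)
  also have "\<dots> = cinner x x - cinner y x * cnj (cinner y x) / cinner y y"
  proof -
    have c0: "cinner y y \<noteq> 0" using False by simp
    have cc: "cnj (cinner y y) = cinner y y" by (simp add: ny)
    have ct: "cnj t = cinner x y / cinner y y" unfolding t_def using cc
      by (simp add: cinner_cnj_commute)
    show ?thesis unfolding ct using c0 unfolding t_def cinner_cnj_commute
      by (simp add: field_simps)
  qed
  finally have e: "cinner (x - scaleC t y) (x - scaleC t y) =
      of_real ((norm x)\<^sup>2 - (cmod (cinner y x))\<^sup>2 / (norm y)\<^sup>2)"
    by (simp add: cinner_self complex_norm_square[symmetric] ny)
  have "0 \<le> (norm x)\<^sup>2 - (cmod (cinner y x))\<^sup>2 / (norm y)\<^sup>2"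
    using cinner_self_nonneg[of "x - scaleC t y"] unfolding e by simp
  then have "(cmod (cinner y x))\<^sup>2 \<le> (norm x * norm y)\<^sup>2"
    using npos by (simp add: field_simps power_mult_distrib)
  then have "cmod (cinner y x) \<le> norm x * norm y"
    by (rule power2_le_imp_le) simp
  then show ?thesis by (metis cinner_commute complex_mod_cnj)
qed

lemma Re_cinner_le: "Re (cinner x (y::'a::complex_inner)) \<le> norm x * norm y"
  using Cauchy_Schwarz_c[of x y] complex_Re_le_cmod order_trans by blast

lemma scaleC_zero_right [simp]: "scaleC c (0::'a::complex_inner) = 0"
  using scaleC_add_right[of c "0::'a" 0] by simp



lemma scaleC_scaleR_comm: "scaleC c (r *\<^sub>R (x::'a::complex_inner)) = r *\<^sub>R scaleC c x"
  by (simp add: scaleR_scaleC scaleC_scaleC mult.commute)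

lemma scaleC_minus_right: "scaleC c (- (x::'a::complex_inner)) = - scaleC c x"
  using scaleC_scaleR_comm[of c "-1" x] by simp

lemma scaleC_sum_right: "scaleC c (\<Sum>i\<in>I. f i) = (\<Sum>i\<in>I. scaleC c (f i::'a::complex_inner))"
  by (induction I rule: infinite_finite_induct) (auto simp: scaleC_add_right)

lemma scaleC_diff_right: "scaleC c (x - (y::'a::complex_inner)) = scaleC c x - scaleC c y"
  using scaleC_add_right[of c x "-y"] by (simp add: scaleC_minus_right)

lemma bcl_bl: "bounded_clinear X \<Longrightarrow> bounded_linear X"
  by (simp add: bounded_clinear_def)

lemma bcl_scaleC: "bounded_clinear X \<Longrightarrow> X (scaleC c x) = scaleC c (X x)"
  by (simp add: bounded_clinear_def)

lemma bcl_comp: "bounded_clinear X \<Longrightarrow> bounded_clinear Y \<Longrightarrow> bounded_clinear (\<lambda>x. X (Y x))"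
  unfolding bounded_clinear_def using bounded_linear_compose[of X Y] by auto

lemma bcl_comp': "bounded_clinear X \<Longrightarrow> bounded_clinear Y \<Longrightarrow> bounded_clinear (X \<circ> Y)"
  using bcl_comp[of X Y] by (simp add: o_def)

lemma bcl_add: "bounded_clinear X \<Longrightarrow> bounded_clinear Y \<Longrightarrow> bounded_clinear (\<lambda>x. X x + Y x)"
  unfolding bounded_clinear_def using bounded_linear_add[of X Y] by (auto simp: scaleC_add_right)

lemma bcl_diff: "bounded_clinear X \<Longrightarrow> bounded_clinear Y \<Longrightarrow> bounded_clinear (\<lambda>x. X x - Y x)"
  unfolding bounded_clinear_def using bounded_linear_sub[of X Y] by (auto simp: scaleC_diff_right)

lemma bcl_scaleR: "bounded_clinear X \<Longrightarrow> bounded_clinear (\<lambda>x. r *\<^sub>R X x)"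
  unfolding bounded_clinear_def
  using bounded_linear_compose[OF bounded_linear_scaleR_right[of r], of X]
  by (auto simp: scaleC_scaleR_comm)

lemma bcl_id: "bounded_clinear (\<lambda>x. x)"
  by (simp add: bounded_clinear_def bounded_linear_ident)

lemma bcl_zero: "bounded_clinear (\<lambda>x. 0)"
  by (simp add: bounded_clinear_def bounded_linear_zero)

lemma bcl_sum: "finite I \<Longrightarrow> (\<And>i. i \<in> I \<Longrightarrow> bounded_clinear (X i)) \<Longrightarrow>
    bounded_clinear (\<lambda>x. \<Sum>i\<in>I. X i x)"
  by (induction I rule: finite_induct) (auto simp: bcl_zero intro: bcl_add)

lemma bcl_norm: "bounded_clinear X \<Longrightarrow> norm (X x) \<le> onorm X * norm x"
  using onorm bcl_bl by blast

lemma bcl_onorm_nonneg: "bounded_clinear X \<Longrightarrow> 0 \<le> onorm X"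
  using onorm_pos_le bcl_bl by blast

lemma bl_add: "bounded_linear X \<Longrightarrow> X (x + y) = X x + X y"
  using linear_add bounded_linear.linear by blast
lemma bl_diff: "bounded_linear X \<Longrightarrow> X (x - y) = X x - X y"
  using linear_diff bounded_linear.linear by blast
lemma bl_scaleR: "bounded_linear X \<Longrightarrow> X (r *\<^sub>R x) = r *\<^sub>R X x"
  using linear_scale bounded_linear.linear by blast
lemma bl_zero: "bounded_linear X \<Longrightarrow> X 0 = 0"
  using linear_0 bounded_linear.linear by blast
lemma bl_minus: "bounded_linear X \<Longrightarrow> X (- x) = - X x"
  using linear_neg bounded_linear.linear by blast
lemma bl_sum: "bounded_linear X \<Longrightarrow> X (\<Sum>i\<in>I. f i) = (\<Sum>i\<in>I. X (f i))"
  using linear_sum bounded_linear.linear by blast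

section \<open>Self-adjoint and positive operators\<close>

definition selfadj :: "('a::complex_inner \<Rightarrow> 'a) \<Rightarrow> bool" where
  "selfadj P \<longleftrightarrow> (\<forall>x y. cinner (P x) y = cinner x (P y))"

definition pos :: "('a::complex_inner \<Rightarrow> 'a) \<Rightarrow> bool" where
  "pos P \<longleftrightarrow> bounded_clinear P \<and> selfadj P \<and> (\<forall>x. 0 \<le> Re (cinner (P x) x))"

lemma selfadj_Im: "selfadj P \<Longrightarrow> Im (cinner (P x) x) = 0"
proof -
  assume "selfadj P"
  then have "cinner (P x) x = cnj (cinner (P x) x)"
    unfolding selfadj_def by (metis cinner_commute)
  then show ?thesis by (metis cnj.simps(2) neg_equal_zero)
qed

lemma selfadj_real: "selfadj P \<Longrightarrow> cinner (P x) x = of_real (Re (cinner (P x) x))"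
  using selfadj_Im[of P x] by (simp add: complex_eq_iff)

lemma pos_bcl: "pos P \<Longrightarrow> bounded_clinear P" by (simp add: pos_def)
lemma pos_selfadj: "pos P \<Longrightarrow> selfadj P" by (simp add: pos_def)
lemma pos_nonneg: "pos P \<Longrightarrow> 0 \<le> Re (cinner (P x) x)" by (simp add: pos_def)

lemma Re_cinner_op_le: "bounded_clinear P \<Longrightarrow> Re (cinner (P x) x) \<le> onorm P * (norm x)\<^sup>2"
proof -
  assume P: "bounded_clinear P"
  have "Re (cinner (P x) x) \<le> norm (P x) * norm x" by (rule Re_cinner_le)
  also have "\<dots> \<le> onorm P * norm x * norm x"
    by (rule mult_right_mono[OF bcl_norm[OF P]]) simp
  finally show ?thesis by (simp add: power2_eq_square mult.assoc)
qed

lemma cmod_cinner_op_le: "bounded_clinear P \<Longrightarrow> cmod (cinner (P x) x) \<le> onorm P * (norm x)\<^sup>2"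
proof -
  assume P: "bounded_clinear P"
  have "cmod (cinner (P x) x) \<le> norm (P x) * norm x" by (rule Cauchy_Schwarz_c)
  also have "\<dots> \<le> onorm P * norm x * norm x"
    by (rule mult_right_mono[OF bcl_norm[OF P]]) simp
  finally show ?thesis by (simp add: power2_eq_square mult.assoc)
qed

section \<open>Polynomials of operators\<close>

lemma poly_op_upto:
  assumes "degree p < n"
  shows "poly_op p P x = (\<Sum>i<n. coeff p i *\<^sub>R (P ^^ i) x)"
proof -
  have "(\<Sum>i<n. coeff p i *\<^sub>R (P ^^ i) x) = (\<Sum>i\<in>{..degree p}. coeff p i *\<^sub>R (P ^^ i) x)"
    by (rule sum.mono_neutral_right) (use assms in \<open>auto intro: coeff_eq_0 simp: not_le\<close>)
  then show ?thesis by (simp add: poly_op_def)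
qed

lemma poly_op_0 [simp]: "poly_op 0 P x = 0"
  by (simp add: poly_op_def)

lemma bl_funpow: "bounded_linear (P::'a::real_normed_vector \<Rightarrow> 'a) \<Longrightarrow> bounded_linear (P ^^ i)"
proof (induction i)
  case 0
  have "P ^^ 0 = (\<lambda>x. x)" by (simp add: fun_eq_iff)
  then show ?case using bounded_linear_ident by metis
next
  case (Suc i)
  then show ?case using bounded_linear_compose[of P "P ^^ i"] by (simp add: o_def)
qed

lemma poly_op_pCons:
  assumes P: "bounded_linear P"
  shows "poly_op (pCons a p) P x = a *\<^sub>R x + P (poly_op p P x)"
proof -
  let ?n = "Suc (degree p)"
  have d: "degree (pCons a p) < Suc ?n" by (simp add: degree_pCons_le le_less_trans)
  have "poly_op (pCons a p) P x = (\<Sum>i<Suc ?n. coeff (pCons a p) i *\<^sub>R (P ^^ i) x)"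
    by (rule poly_op_upto[OF d])
  also have "\<dots> = a *\<^sub>R x + (\<Sum>i<?n. coeff p i *\<^sub>R P ((P ^^ i) x))"
    by (subst sum.lessThan_Suc_shift) simp
  also have "(\<Sum>i<?n. coeff p i *\<^sub>R P ((P ^^ i) x)) = P (poly_op p P x)"
    unfolding poly_op_upto[of p ?n, OF lessI] bl_sum[OF P] bl_scaleR[OF P] ..
  finally show ?thesis .
qed

lemma poly_op_const [simp]: "poly_op [:c:] P x = c *\<^sub>R x"
  by (simp add: poly_op_def)

lemma poly_op_bl: "bounded_linear P \<Longrightarrow> bounded_linear (poly_op p P)"
  unfolding poly_op_def
  by (intro bounded_linear_sum bounded_linear_compose[OF bounded_linear_scaleR_right] bl_funpow)

lemma poly_op_add:
  assumes P: "bounded_linear P"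
  shows "poly_op (p + q) P x = poly_op p P x + poly_op q P x"
proof (induction p arbitrary: q x rule: pCons_induct)
  case 0 then show ?case by simp
next
  case (pCons a p)
  show ?case
  proof (cases q rule: pCons_cases)
    case (pCons b q')
    show ?thesis unfolding pCons add_pCons poly_op_pCons[OF P] pCons.IH
      by (simp add: bl_add[OF P] scaleR_add_left algebra_simps)
  qed
qed

lemma poly_op_smult:
  assumes P: "bounded_linear P"
  shows "poly_op (smult c p) P x = c *\<^sub>R poly_op p P x"
  by (induction p arbitrary: x rule: pCons_induct)
     (simp_all add: poly_op_pCons[OF P] bl_scaleR[OF P] scaleR_add_right)

lemma poly_op_minus:
  assumes P: "bounded_linear P"
  shows "poly_op (- p) P x = - poly_op p P x"
  using poly_op_smult[OF P, of "-1" p] by simp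

lemma poly_op_diff:
  assumes P: "bounded_linear P"
  shows "poly_op (p - q) P x = poly_op p P x - poly_op q P x"
  using poly_op_add[OF P, of p "-q"] poly_op_minus[OF P] by simp

lemma poly_op_mult:
  assumes P: "bounded_linear P"
  shows "poly_op (p * q) P x = poly_op p P (poly_op q P x)"
proof (induction p arbitrary: x rule: pCons_induct)
  case 0 then show ?case by simp
next
  case (pCons a p)
  have "poly_op (pCons a p * q) P x = poly_op (smult a q + pCons 0 (p * q)) P x" by simp
  also have "\<dots> = a *\<^sub>R poly_op q P x + P (poly_op p P (poly_op q P x))"
    by (simp add: poly_op_add[OF P] poly_op_smult[OF P] poly_op_pCons[OF P] pCons.IH)
  finally show ?case by (simp add: poly_op_pCons[OF P])
qed

lemma poly_op_X [simp]: "bounded_linear P \<Longrightarrow> poly_op [:0, 1:] P x = P x"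
  by (simp add: poly_op_pCons)

lemma poly_op_one [simp]: "poly_op 1 P x = x"
  by (simp add: one_pCons)

lemma poly_op_power:
  assumes P: "bounded_linear P"
  shows "poly_op (p ^ n) P x = (poly_op p P ^^ n) x"
  by (induction n arbitrary: x) (simp_all add: poly_op_mult[OF P])

lemma poly_op_sum:
  assumes P: "bounded_linear P"
  shows "poly_op (\<Sum>i\<in>I. f i) P x = (\<Sum>i\<in>I. poly_op (f i) P x)"
  by (induction I rule: infinite_finite_induct) (simp_all add: poly_op_add[OF P])

lemma poly_op_commute:
  assumes P: "bounded_linear P"
  shows "poly_op p P (poly_op q P x) = poly_op q P (poly_op p P x)"
  by (metis P mult.commute poly_op_mult)

lemma poly_op_commute_P:
  assumes P: "bounded_linear P"
  shows "P (poly_op p P x) = poly_op p P (P x)"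
  using poly_op_commute[OF P, of "[:0,1:]" p] P by simp

lemma poly_op_pcompose:
  assumes P: "bounded_linear P"
  shows "poly_op (pcompose p q) P x = poly_op p (poly_op q P) x"
proof (induction p arbitrary: x rule: pCons_induct)
  case 0 then show ?case by (simp add: poly_op_def)
next
  case (pCons a p)
  have Q: "bounded_linear (poly_op q P)" by (rule poly_op_bl[OF P])
  show ?case
    by (simp add: pcompose_pCons poly_op_add[OF P] poly_op_mult[OF P] pCons.IH poly_op_pCons[OF Q])
qed

lemma poly_op_bcl: "bounded_clinear P \<Longrightarrow> bounded_clinear (poly_op p P)"
proof (induction p rule: pCons_induct)
  case 0
  have "poly_op 0 P = (\<lambda>x. 0)" by (simp add: fun_eq_iff)
  then show ?case using bcl_zero by metis
next
  case (pCons a p)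
  have e: "poly_op (pCons a p) P = (\<lambda>x. a *\<^sub>R x + P (poly_op p P x))"
    using poly_op_pCons[OF bcl_bl[OF pCons.prems]] by blast
  show ?case unfolding e
    by (rule bcl_add[OF bcl_scaleR[OF bcl_id] bcl_comp[OF pCons.prems pCons.IH[OF pCons.prems]]])
qed

lemma poly_op_selfadj:
  assumes P: "bounded_clinear P" "selfadj P"
  shows "selfadj (poly_op p P)"
proof (induction p rule: pCons_induct)
  case 0 then show ?case by (simp add: selfadj_def)
next
  case (pCons a p)
  have e: "poly_op (pCons a p) P = (\<lambda>x. a *\<^sub>R x + P (poly_op p P x))"
    using poly_op_pCons[OF bcl_bl[OF P(1)]] by blast
  have "cinner (P (poly_op p P x)) y = cinner x (P (poly_op p P y))" for x y
  proof -
    have "cinner (P (poly_op p P x)) y = cinner (poly_op p P x) (P y)"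
      using P(2) unfolding selfadj_def by blast
    also have "\<dots> = cinner x (poly_op p P (P y))"
      using pCons.IH unfolding selfadj_def by blast
    also have "\<dots> = cinner x (P (poly_op p P y))"
      by (simp add: poly_op_commute_P[OF bcl_bl[OF P(1)]])
    finally show ?thesis .
  qed
  note h = this
  show ?case unfolding selfadj_def
  proof (intro allI)
    fix x y
    show "cinner (poly_op (pCons a p) P x) y = cinner x (poly_op (pCons a p) P y)"
      unfolding e cinner_add_left cinner_add_right cinner_scaleR_left cinner_scaleR_right h ..
  qed
qed

section \<open>Bernstein polynomials as real polynomials\<close>

definition bp :: "nat \<Rightarrow> nat \<Rightarrow> real poly" where
  "bp N k = smult (of_nat (N choose k)) ([:0,1:] ^ k * [:1,-1:] ^ (N - k))"

definition FB :: "nat \<Rightarrow> nat \<Rightarrow> real poly" where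
  "FB N j = (\<Sum>k\<le>N. smult ((real k / real N) ^ j) (bp N k))"

lemma pderiv_sum': "pderiv (\<Sum>i\<in>I. f i) = (\<Sum>i\<in>I. pderiv (f i :: real poly))"
  by (induction I rule: infinite_finite_induct) (simp_all add: pderiv_add)

lemma smult_sum_right': "smult a (\<Sum>i\<in>I. f i) = (\<Sum>i\<in>I. smult a (f i :: real poly))"
  by (induction I rule: infinite_finite_induct) (simp_all add: smult_add_right)

lemma smult_as_mult: "smult a p = [:a:] * (p :: real poly)" by simp

lemma smult_pow_pred: "smult (of_nat k) (p ^ (k - 1)) * p = smult (of_nat k) (p ^ k)"
  by (cases k) (simp_all add: ac_simps)

lemma smult_of_nat_poly: "smult (of_nat m) q = (of_nat m :: real poly) * q"
  by (simp add: of_nat_poly)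

lemma pow_pred_mult: "(of_nat k :: 'a::comm_semiring_1) * p ^ (k - 1) * p = of_nat k * p ^ k"
  by (cases k) (simp_all add: ac_simps)

lemma pderiv_XY:
  fixes k m :: nat
  shows "[:0,1,-1:] * pderiv ([:0,1:] ^ k * [:1,-1:] ^ m :: real poly) =
     smult (of_nat k) ([:0,1:] ^ k * [:1,-1:] ^ m) - smult (of_nat (k + m)) ([:0,1:] * ([:0,1:] ^ k * [:1,-1:] ^ m))"
proof -
  define X where "X = ([:0,1:] :: real poly)"
  define Y where "Y = ([:1,-1:] :: real poly)"
  have XY: "[:0,1,-1:] = X * Y" by (simp add: X_def Y_def)
  have Y1: "Y = 1 - X" by (simp add: X_def Y_def one_pCons)
  have dX: "pderiv X = 1" by (simp add: pderiv_pCons X_def)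
  have dY: "pderiv Y = -1" by (simp add: pderiv_pCons Y_def one_pCons)
  have D: "pderiv (X ^ k * Y ^ m) = - (X ^ k * (of_nat m * Y ^ (m - 1)))
      + of_nat k * X ^ (k - 1) * Y ^ m"
    by (simp add: pderiv_mult pderiv_power dX dY smult_of_nat_poly)
  have "X * Y * pderiv (X ^ k * Y ^ m) =
     - (X * X ^ k * (of_nat m * Y ^ (m - 1) * Y)) + (of_nat k * X ^ (k - 1) * X) * Y ^ m * Y"
    unfolding D by (simp add: algebra_simps)
  also have "\<dots> = - (of_nat m * (X * (X ^ k * Y ^ m))) + of_nat k * (X ^ k * Y ^ m * Y)"
    unfolding pow_pred_mult by (simp add: algebra_simps)
  also have "X ^ k * Y ^ m * Y = X ^ k * Y ^ m - X * (X ^ k * Y ^ m)"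
    unfolding Y1 by (simp add: algebra_simps)
  finally have "X * Y * pderiv (X ^ k * Y ^ m) =
      of_nat k * (X ^ k * Y ^ m) - of_nat (k + m) * (X * (X ^ k * Y ^ m))"
    by (simp add: algebra_simps)
  then show ?thesis unfolding XY[symmetric] X_def Y_def smult_of_nat_poly by simp
qed

lemma FB_0: "FB N 0 = 1"
proof -
  have "FB N 0 = (\<Sum>k\<le>N. of_nat (N choose k) * [:0,1:] ^ k * [:1,-1:] ^ (N - k))"
    unfolding FB_def bp_def by (simp add: of_nat_poly mult.assoc)
  also have "\<dots> = ([:0,1:] + [:1,-1:]) ^ N" by (rule binomial_ring[symmetric])
  also have "[:0,1:] + [:1,-1:] = (1 :: real poly)" by (simp add: one_pCons)
  finally show ?thesis by simp
qed

lemma FB_Suc: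
  assumes N: "N > 0"
  shows "FB N (Suc j) = [:0,1:] * FB N j + smult (1 / real N) ([:0,1,-1:] * pderiv (FB N j))"
proof -
  let ?X = "[:0,1:] :: real poly" and ?Y = "[:1,-1:] :: real poly"
  let ?b = "\<lambda>k. ?X ^ k * ?Y ^ (N - k)"
  have bpb: "bp N k = smult (of_nat (N choose k)) (?b k)" for k by (simp add: bp_def)
  have d: "[:0,1,-1:] * pderiv (bp N k) = smult (of_nat (N choose k))
       (smult (of_nat k) (?b k) - smult (of_nat N) (?X * ?b k))" if "k \<le> N" for k
    using pderiv_XY[of k "N - k"] that by (simp add: bpb pderiv_smult mult_smult_right)
  have "[:0,1,-1:] * pderiv (FB N j) = (\<Sum>k\<le>N. smult ((real k / real N) ^ j)
      ([:0,1,-1:] * pderiv (bp N k)))"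
    by (simp add: FB_def pderiv_sum' pderiv_smult sum_distrib_left mult_smult_right)
  also have "\<dots> = (\<Sum>k\<le>N. smult (real N * (real k / real N) ^ Suc j) (bp N k)
      - smult (real N * (real k / real N) ^ j) (?X * bp N k))"
  proof (rule sum.cong[OF refl])
    fix k assume "k \<in> {..N}"
    then have kN: "k \<le> N" by simp
    have sc: "real N * (real k / real N) ^ Suc j = (real k / real N)^j * real k"
      using N by (simp add: field_simps)
    show "smult ((real k / real N) ^ j) ([:0,1,-1:] * pderiv (bp N k)) =
      smult (real N * (real k / real N) ^ Suc j) (bp N k)
      - smult (real N * (real k / real N) ^ j) (?X * bp N k)"
      unfolding d[OF kN] sc unfolding bpb mult_smult_right smult_diff_right smult_smult
      by (simp add: ac_simps)
  qed
  also have "\<dots> = smult (real N) (FB N (Suc j)) - smult (real N) (?X * FB N j)"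
    by (simp add: FB_def sum_subtractf smult_sum_right' smult_sum mult_smult_right sum_distrib_left
         smult_smult del: power_Suc)
  finally have "[:0,1,-1:] * pderiv (FB N j) = smult (real N) (FB N (Suc j) - ?X * FB N j)"
    by (simp add: smult_diff_right)
  then have "smult (1 / real N) ([:0,1,-1:] * pderiv (FB N j)) = FB N (Suc j) - ?X * FB N j"
    using N by simp
  then show ?thesis by simp
qed


lemma FB_degree: "N > 0 \<Longrightarrow> degree (FB N j) \<le> j"
proof (induction j)
  case 0 then show ?case by (simp add: FB_0)
next
  case (Suc j)
  let ?F = "FB N j"
  have a: "degree ([:0,1:] * ?F) \<le> Suc j"
    using degree_mult_le[of "[:0,1:]" ?F] Suc by simp
  have b: "degree ([:0,1,-1:] * pderiv ?F) \<le> Suc j"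
  proof (cases "degree ?F = 0")
    case True then have "pderiv ?F = 0" by (simp add: pderiv_eq_0_iff)
    then show ?thesis by simp
  next
    case False
    have "degree ([:0,1,-1:] * pderiv ?F) \<le> degree [:0,1,-1::real:] + degree (pderiv ?F)"
      by (rule degree_mult_le)
    also have "\<dots> \<le> 2 + (j - 1)" using Suc by (simp add: degree_pderiv)
    finally show ?thesis using False Suc by simp
  qed
  show ?case unfolding FB_Suc[OF Suc.prems]
    by (rule degree_add_le[OF a order.trans[OF degree_smult_le b]])
qed

lemma coeff_XY_0: "coeff ([:0,1,-1:] * G) 0 = (0::real)" by simp
lemma coeff_XY_1: "coeff ([:0,1,-1:] * G) (Suc 0) = (coeff G 0::real)" by simp
lemma coeff_XY_SS: "coeff ([:0,1,-1:] * G) (Suc (Suc n)) = (coeff G (Suc n) - coeff G n::real)"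
  by simp

lemma convergent_coeff_XY:
  assumes "\<And>n. convergent (\<lambda>N. coeff (G N) n :: real)"
  shows "convergent (\<lambda>N. coeff ([:0,1,-1:] * G N) i)"
proof (cases i)
  case 0 then show ?thesis by (simp add: convergent_const)
next
  case (Suc i')
  show ?thesis
  proof (cases i')
    case 0 then show ?thesis using Suc assms by simp
  next
    case (Suc n)
    then show ?thesis using \<open>i = Suc i'\<close> assms by (simp add: convergent_diff)
  qed
qed

lemma FB_coeff_lim: "(\<lambda>N. coeff (FB N j) i) \<longlonglongrightarrow> (if i = j then 1 else 0)"
proof (induction j arbitrary: i)
  case 0 then show ?case by (simp add: FB_0)
next
  case (Suc j)
  have cF: "convergent (\<lambda>N. coeff (FB N j) n)" for n using Suc.IH convergent_def by blast
  have cD: "convergent (\<lambda>N. coeff (pderiv (FB N j)) n)" for n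
    unfolding coeff_pderiv by (intro convergent_mult_const_iff[THEN iffD2]) (use cF in auto)
  have cG: "convergent (\<lambda>N. coeff ([:0,1,-1:] * pderiv (FB N j)) i)"
    by (rule convergent_coeff_XY[OF cD])
  then obtain L where L: "(\<lambda>N. coeff ([:0,1,-1:] * pderiv (FB N j)) i) \<longlonglongrightarrow> L"
    by (auto simp: convergent_def)
  have z: "(\<lambda>N. 1 / real N * coeff ([:0,1,-1:] * pderiv (FB N j)) i) \<longlonglongrightarrow> 0"
    using tendsto_mult[OF lim_inverse_n' L] by simp
  have x: "(\<lambda>N. coeff ([:0,1:] * FB N j) i) \<longlonglongrightarrow> (if i = Suc j then 1 else 0)"
  proof (cases i)
    case 0 then show ?thesis by simp
  next
    case (Suc i') then show ?thesis using Suc.IH[of i'] by simp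
  qed
  have "(\<lambda>N. coeff ([:0,1:] * FB N j) i + 1 / real N * coeff ([:0,1,-1:] * pderiv (FB N j)) i)
      \<longlonglongrightarrow> (if i = Suc j then 1 else 0)"
    using tendsto_add[OF x z] by simp
  moreover have "\<forall>\<^sub>F N in sequentially. coeff ([:0,1:] * FB N j) i + 1 / real N * coeff ([:0,1,-1:] * pderiv (FB N j)) i
      = coeff (FB N (Suc j)) i"
    using eventually_gt_at_top[of 0] by eventually_elim (simp only: FB_Suc coeff_add coeff_smult)
  ultimately show ?case by (rule Lim_transform_eventually)
qed

definition Bu :: "nat \<Rightarrow> real poly \<Rightarrow> real poly" where
  "Bu N u = (\<Sum>k\<le>N. smult (poly u (real k / real N)) (bp N k))"

lemma Bu_eq: "Bu N u = (\<Sum>j\<le>degree u. smult (coeff u j) (FB N j))"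
proof -
  have "Bu N u = (\<Sum>k\<le>N. \<Sum>j\<le>degree u. smult (coeff u j * (real k / real N) ^ j) (bp N k))"
    unfolding Bu_def poly_altdef smult_sum ..
  also have "\<dots> = (\<Sum>j\<le>degree u. \<Sum>k\<le>N. smult (coeff u j * (real k / real N) ^ j) (bp N k))"
    by (rule sum.swap)
  also have "\<dots> = (\<Sum>j\<le>degree u. smult (coeff u j) (FB N j))"
    unfolding FB_def smult_sum_right' by simp
  finally show ?thesis .
qed

lemma Bu_coeff_lim: "(\<lambda>N. coeff (Bu N u - u) i) \<longlonglongrightarrow> 0"
proof -
  have "(\<lambda>N. \<Sum>j\<le>degree u. coeff u j * coeff (FB N j) i) \<longlonglongrightarrow>
      (\<Sum>j\<le>degree u. coeff u j * (if i = j then 1 else 0))"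
    by (intro tendsto_sum tendsto_mult tendsto_const FB_coeff_lim)
  also have "(\<Sum>j\<le>degree u. coeff u j * (if i = j then 1 else 0)) = coeff u i"
  proof -
    have "(\<Sum>j\<le>degree u. coeff u j * (if i = j then 1 else 0)) = (\<Sum>j\<le>degree u. if i = j then coeff u j else 0)"
      by (rule sum.cong) auto
    then show ?thesis by (cases "i \<le> degree u") (auto simp: coeff_eq_0)
  qed
  finally have "(\<lambda>N. coeff (Bu N u) i) \<longlonglongrightarrow> coeff u i"
    by (simp add: Bu_eq coeff_sum)
  from tendsto_diff[OF this tendsto_const[of "coeff u i"]] show ?thesis by simp
qed

lemma Bu_degree: "N > 0 \<Longrightarrow> degree (Bu N u - u) \<le> degree u"
proof -
  assume N: "N > 0"
  have "degree (Bu N u) \<le> degree u"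
    unfolding Bu_eq
  proof (rule degree_sum_le)
    fix j assume "j \<in> {..degree u}"
    then show "degree (smult (coeff u j) (FB N j)) \<le> degree u"
      using FB_degree[OF N, of j] degree_smult_le[of "coeff u j" "FB N j"] by simp
  qed simp
  then show ?thesis using degree_diff_le by blast
qed

section \<open>Positivity of polynomials of a positive contraction\<close>

definition ppos :: "('a::complex_inner \<Rightarrow> 'a) \<Rightarrow> real poly \<Rightarrow> bool" where
  "ppos Q p \<longleftrightarrow> (\<forall>x. 0 \<le> Re (cinner (poly_op p Q x) x))"

lemma ppos_add:
  assumes Q: "bounded_linear Q" and "ppos Q p" "ppos Q q"
  shows "ppos Q (p + q)"
  using assms unfolding ppos_def by (simp add: poly_op_add[OF Q] cinner_add_left)

lemma ppos_smult:
  assumes Q: "bounded_linear Q" and "ppos Q p" "0 \<le> c"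
  shows "ppos Q (smult c p)"
  using assms unfolding ppos_def by (simp add: poly_op_smult[OF Q] cinner_scaleR_left)

lemma ppos_0: "ppos Q 0" by (simp add: ppos_def)

lemma ppos_sum:
  assumes Q: "bounded_linear Q" and "\<And>i. i \<in> I \<Longrightarrow> ppos Q (f i)"
  shows "ppos Q (\<Sum>i\<in>I. f i)"
  using assms(2)
  by (induction I rule: infinite_finite_induct) (auto simp: ppos_0 intro!: ppos_add[OF Q])

lemma ppos_sandwich:
  assumes Q: "bounded_clinear Q" "selfadj Q" and r: "ppos Q r"
  shows "ppos Q (w * w * r)"
  unfolding ppos_def
proof
  fix x
  have Ql: "bounded_linear Q" using Q(1) by (rule bcl_bl)
  have sw: "selfadj (poly_op w Q)" by (rule poly_op_selfadj[OF Q])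
  have "cinner (poly_op (w * w * r) Q x) x = cinner (poly_op w Q (poly_op r Q (poly_op w Q x))) x"
    by (simp add: poly_op_mult[OF Ql] poly_op_commute[OF Ql, of r w])
  also have "\<dots> = cinner (poly_op r Q (poly_op w Q x)) (poly_op w Q x)"
    using sw unfolding selfadj_def by blast
  finally show "0 \<le> Re (cinner (poly_op (w * w * r) Q x) x)"
    using r unfolding ppos_def by simp
qed

lemma ppos_1: "ppos Q 1" by (simp add: ppos_def Re_cinner_self)

lemma ppos_X: "pos Q \<Longrightarrow> ppos Q [:0,1:]"
  by (simp add: ppos_def pos_nonneg bcl_bl pos_bcl)

lemma ppos_Y:
  assumes Q: "pos Q" and n: "\<And>x. norm (Q x) \<le> norm x"
  shows "ppos Q [:1,-1:]"
  unfolding ppos_def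
proof
  fix x
  have Ql: "bounded_linear Q" using Q by (simp add: pos_bcl bcl_bl)
  have e: "[:1,-1:] = 1 - [:0,1::real:]" by (simp add: one_pCons)
  have "Re (cinner (Q x) x) \<le> norm (Q x) * norm x" by (rule Re_cinner_le)
  also have "\<dots> \<le> norm x * norm x" by (rule mult_right_mono[OF n]) simp
  finally show "0 \<le> Re (cinner (poly_op [:1, -1:] Q x) x)"
    unfolding e poly_op_diff[OF Ql] by (simp add: cinner_diff_left Re_cinner_self power2_eq_square Ql)
qed

lemma ppos_XY:
  assumes Q: "pos Q" and n: "\<And>x. norm (Q x) \<le> norm x"
  shows "ppos Q ([:0,1:] * [:1,-1:])"
proof -
  have Ql: "bounded_linear Q" using Q by (simp add: pos_bcl bcl_bl)
  have e: "[:0,1:] * [:1,-1:] = [:0,1:] * [:0,1:] * [:1,-1::real:] + [:1,-1:] * [:1,-1:] * [:0,1:]"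
    by simp
  show ?thesis unfolding e
    by (intro ppos_add[OF Ql] ppos_sandwich[OF pos_bcl[OF Q] pos_selfadj[OF Q]] ppos_X ppos_Y Q n)
qed

lemma ppos_XkYm:
  assumes Q: "pos Q" and n: "\<And>x. norm (Q x) \<le> norm x"
  shows "ppos Q ([:0,1:] ^ k * [:1,-1:] ^ m)"
proof (induction "k + m" arbitrary: k m rule: less_induct)
  case less
  let ?X = "[:0,1::real:]" and ?Y = "[:1,-1::real:]"
  note sw = ppos_sandwich[OF pos_bcl[OF Q] pos_selfadj[OF Q]]
  show ?case
  proof (cases "k \<ge> 2")
    case True
    then obtain k' where k: "k = Suc (Suc k')" by (metis add_2_eq_Suc le_Suc_ex)
    have "?X ^ k * ?Y ^ m = ?X * ?X * (?X ^ k' * ?Y ^ m)" by (simp only: k power_Suc mult_ac)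
    moreover have "ppos Q (?X ^ k' * ?Y ^ m)" using less[of k' m] k by simp
    ultimately show ?thesis using sw by metis
  next
    case k2: False
    show ?thesis
    proof (cases "m \<ge> 2")
      case True
      then obtain m' where m: "m = Suc (Suc m')" by (metis add_2_eq_Suc le_Suc_ex)
      have "?X ^ k * ?Y ^ m = ?Y * ?Y * (?X ^ k * ?Y ^ m')" by (simp only: m power_Suc mult_ac)
      moreover have "ppos Q (?X ^ k * ?Y ^ m')" using less[of k m'] m by simp
      ultimately show ?thesis using sw by metis
    next
      case False
      then have "k = 0 \<or> k = 1" "m = 0 \<or> m = 1" using k2 by auto
      then show ?thesis using ppos_1 ppos_X[OF Q] ppos_Y[OF Q n] ppos_XY[OF Q n] by auto
    qed
  qed
qed

lemma ppos_Bu: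
  assumes Q: "pos Q" and n: "\<And>x. norm (Q x) \<le> norm x"
    and u: "\<And>t. 0 \<le> t \<Longrightarrow> t \<le> 1 \<Longrightarrow> 0 \<le> poly u t"
  shows "ppos Q (Bu N u)"
proof -
  have Ql: "bounded_linear Q" using Q by (simp add: pos_bcl bcl_bl)
  show ?thesis unfolding Bu_def
  proof (rule ppos_sum[OF Ql])
    fix k assume k: "k \<in> {..N}"
    have "0 \<le> poly u (real k / real N)"
      using k by (intro u) (auto simp: divide_le_eq_1)
    then show "ppos Q (smult (poly u (real k / real N)) (bp N k))"
      unfolding bp_def
      by (intro ppos_smult[OF Ql] ppos_XkYm[OF Q n]) auto
  qed
qed

lemma funpow_contr:
  fixes Q :: "'a::real_normed_vector \<Rightarrow> 'a"
  assumes Ql: "bounded_linear Q" and n: "\<And>x. norm (Q x) \<le> norm x"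
  shows "norm ((Q ^^ i) x) \<le> norm x"
proof (induction i)
  case 0 then show ?case by simp
next
  case (Suc i)
  have "norm ((Q ^^ Suc i) x) = norm (Q ((Q ^^ i) x))" by simp
  also have "\<dots> \<le> norm ((Q ^^ i) x)" by (rule n)
  finally show ?case using Suc by simp
qed

lemma poly_op_coeff_bound:
  assumes Ql: "bounded_linear Q" and n: "\<And>x. norm (Q x) \<le> norm x" and d: "degree p \<le> d"
  shows "norm (poly_op p Q x) \<le> (\<Sum>i<Suc d. \<bar>coeff p i\<bar>) * norm x"
proof -
  have "norm (poly_op p Q x) = norm (\<Sum>i<Suc d. coeff p i *\<^sub>R (Q ^^ i) x)"
    using d by (subst poly_op_upto[of p "Suc d"]) auto
  also have "\<dots> \<le> (\<Sum>i<Suc d. norm (coeff p i *\<^sub>R (Q ^^ i) x))" by (rule norm_sum)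
  also have "\<dots> \<le> (\<Sum>i<Suc d. \<bar>coeff p i\<bar> * norm x)"
    by (rule sum_mono) (simp add: mult_left_mono funpow_contr[OF Ql n])
  finally show ?thesis by (simp only: sum_distrib_right)
qed

lemma ppos_contr:
  assumes Q: "pos Q" and n: "\<And>x. norm (Q x) \<le> norm x"
    and u: "\<And>t. 0 \<le> t \<Longrightarrow> t \<le> 1 \<Longrightarrow> 0 \<le> poly u t"
  shows "ppos Q u"
  unfolding ppos_def
proof
  fix x
  have Ql: "bounded_linear Q" using Q by (simp add: pos_bcl bcl_bl)
  define e where "e N = (\<Sum>i<Suc (degree u). \<bar>coeff (Bu N u - u) i\<bar>)" for N
  have e0: "e \<longlonglongrightarrow> 0"
  proof -
    have "e \<longlonglongrightarrow> (\<Sum>i<Suc (degree u). \<bar>0::real\<bar>)"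
      unfolding e_def by (intro tendsto_sum tendsto_rabs Bu_coeff_lim)
    then show ?thesis by simp
  qed
  have le: "- (e N * (norm x)\<^sup>2) \<le> Re (cinner (poly_op u Q x) x)" if N: "N > 0" for N
  proof -
    have nb: "norm (poly_op (Bu N u - u) Q x) \<le> e N * norm x"
      unfolding e_def by (rule poly_op_coeff_bound[OF Ql n Bu_degree[OF N]])
    have "Re (cinner (poly_op (Bu N u - u) Q x) x) \<le> norm (poly_op (Bu N u - u) Q x) * norm x"
      by (rule Re_cinner_le)
    also have "\<dots> \<le> e N * norm x * norm x" by (rule mult_right_mono[OF nb]) simp
    finally have a: "Re (cinner (poly_op (Bu N u - u) Q x) x) \<le> e N * (norm x)\<^sup>2"
      by (simp add: power2_eq_square mult.assoc)
    have b: "0 \<le> Re (cinner (poly_op (Bu N u) Q x) x)"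
      using ppos_Bu[OF Q n u] unfolding ppos_def by blast
    show ?thesis using a b by (simp add: poly_op_diff[OF Ql] cinner_diff_left)
  qed
  have "(\<lambda>N. - (e N * (norm x)\<^sup>2)) \<longlonglongrightarrow> - (0 * (norm x)\<^sup>2)"
    by (intro tendsto_minus tendsto_mult e0 tendsto_const)
  moreover have "\<forall>\<^sub>F N in sequentially. - (e N * (norm x)\<^sup>2) \<le> Re (cinner (poly_op u Q x) x)"
    using eventually_gt_at_top[of 0] by eventually_elim (rule le)
  ultimately show "0 \<le> Re (cinner (poly_op u Q x) x)"
    using tendsto_le[OF trivial_limit_sequentially tendsto_const] by fastforce
qed

lemma poly_op_zero_op:
  assumes Pl: "bounded_linear P" and z: "\<And>x. P x = 0"
  shows "poly_op u P x = poly u 0 *\<^sub>R x"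
  by (induction u arbitrary: x rule: pCons_induct) (simp_all add: poly_op_pCons[OF Pl] z)

lemma ppos_M:
  assumes P: "pos P" and M: "onorm P \<le> M" "0 < M"
    and u: "\<And>t. 0 \<le> t \<Longrightarrow> t \<le> M \<Longrightarrow> 0 \<le> poly u t"
  shows "ppos P u"
proof -
  have Pl: "bounded_linear P" using P by (simp add: pos_bcl bcl_bl)
  define Q where "Q = (\<lambda>x. (1 / M) *\<^sub>R P x)"
  have Qc: "bounded_clinear Q" unfolding Q_def by (rule bcl_scaleR[OF pos_bcl[OF P]])
  have Q: "pos Q" unfolding pos_def
  proof (intro conjI allI)
    show "bounded_clinear Q" by (rule Qc)
    show "selfadj Q" using pos_selfadj[OF P] unfolding selfadj_def Q_def
      by (simp add: cinner_scaleR_left cinner_scaleR_right)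
    fix x show "0 \<le> Re (cinner (Q x) x)"
      using pos_nonneg[OF P, of x] M unfolding Q_def by (simp add: cinner_scaleR_left)
  qed
  have n: "norm (Q x) \<le> norm x" for x
  proof -
    have "norm (Q x) = norm (P x) / M" unfolding Q_def using M by simp
    also have "\<dots> \<le> onorm P * norm x / M"
      by (rule divide_right_mono[OF onorm[OF Pl]]) (use M in simp)
    also have "\<dots> \<le> M * norm x / M"
      by (rule divide_right_mono[OF mult_right_mono]) (use M in simp_all)
    finally show ?thesis using M by simp
  qed
  define v where "v = pcompose u [:0, M:]"
  have "ppos Q v"
    by (rule ppos_contr[OF Q n]) (use M u in \<open>simp add: v_def poly_pcompose\<close>)
  moreover have "poly_op [:0, M:] Q = P"
  proof
    fix x
    have Ql: "bounded_linear Q" using Qc by (rule bcl_bl)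
    have "poly_op [:0, M:] Q x = Q (M *\<^sub>R x)" by (simp add: poly_op_pCons[OF Ql] bl_zero[OF Ql])
    also have "\<dots> = P x" using M by (simp add: Q_def bl_scaleR[OF Pl])
    finally show "poly_op [:0, M:] Q x = P x" .
  qed
  ultimately show ?thesis
    unfolding ppos_def v_def poly_op_pcompose[OF bcl_bl[OF Qc]] by simp
qed

lemma ppos_onorm:
  assumes P: "pos P" and u: "\<And>t. 0 \<le> t \<Longrightarrow> t \<le> onorm P \<Longrightarrow> 0 \<le> poly u t"
  shows "ppos P u"
proof (cases "onorm P = 0")
  case True
  have Pl: "bounded_linear P" using P by (simp add: pos_bcl bcl_bl)
  have z: "P x = 0" for x using True onorm_eq_0[OF Pl] by simp
  show ?thesis unfolding ppos_def poly_op_zero_op[OF Pl z]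
    using u[of 0] True by (simp add: cinner_scaleR_left Re_cinner_self)
next
  case False
  then have "0 < onorm P" using bcl_onorm_nonneg[OF pos_bcl[OF P]] by simp
  then show ?thesis using ppos_M[OF P order.refl] u by blast
qed

lemma poly_op_norm_le:
  assumes P: "pos P" and u: "\<And>t. 0 \<le> t \<Longrightarrow> t \<le> onorm P \<Longrightarrow> \<bar>poly u t\<bar> \<le> c"
  shows "norm (poly_op u P x) \<le> c * norm x"
proof -
  have Pc: "bounded_clinear P" by (rule pos_bcl[OF P])
  have Pl: "bounded_linear P" using Pc by (rule bcl_bl)
  have c0: "0 \<le> c" using u[of 0] bcl_onorm_nonneg[OF Pc] by simp
  have "ppos P ([:c^2:] - u * u)"
  proof (rule ppos_onorm[OF P])
    fix t assume "0 \<le> t" "t \<le> onorm P"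
    then have "\<bar>poly u t\<bar> \<le> c" by (rule u)
    then have "(poly u t)^2 \<le> c^2" by (metis abs_ge_zero power2_abs power_mono)
    then show "0 \<le> poly ([:c^2:] - u * u) t" by (simp add: power2_eq_square)
  qed
  then have "0 \<le> Re (cinner (poly_op ([:c^2:] - u * u) P x) x)" unfolding ppos_def by blast
  moreover have "cinner (poly_op u P (poly_op u P x)) x = cinner (poly_op u P x) (poly_op u P x)"
    using poly_op_selfadj[OF Pc pos_selfadj[OF P]] unfolding selfadj_def by metis
  ultimately have "(norm (poly_op u P x))^2 \<le> (c * norm x)^2"
    by (simp add: poly_op_diff[OF Pl] poly_op_mult[OF Pl] cinner_diff_left cinner_scaleR_left
        Re_cinner_self power_mult_distrib)
  then show ?thesis by (rule power2_le_imp_le) (use c0 in simp)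
qed

section \<open>Weierstrass approximation by real polynomials\<close>

definition unif_approx :: "(real \<Rightarrow> real) \<Rightarrow> real \<Rightarrow> (nat \<Rightarrow> real poly) \<Rightarrow> bool" where
  "unif_approx f M ps \<longleftrightarrow> (\<forall>e>0. \<exists>N. \<forall>n\<ge>N. \<forall>t\<in>{0..M}. \<bar>poly (ps n) t - f t\<bar> < e)"

lemma poly_bp: "poly (bp n k) x = Bernstein n k x"
  by (simp add: bp_def Bernstein_def)

lemma unif_approx_exists:
  assumes f: "continuous_on {0..M} f" and M: "0 \<le> M"
  shows "\<exists>ps. unif_approx f M ps"
proof (cases "M = 0")
  case True
  then show ?thesis by (intro exI[of _ "\<lambda>n. [:f 0:]"]) (auto simp: unif_approx_def)
next
  case False
  with M have M: "0 < M" by simp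
  define g where "g s = f (M * s)" for s
  have g: "continuous_on {0..1} g"
    unfolding g_def
    by (rule continuous_on_compose2[OF f]) (use M in \<open>auto intro!: continuous_intros simp: mult_le_cancel_left1\<close>)
  define ps where "ps n = pcompose (\<Sum>k\<le>n. smult (g (real k / real n)) (bp n k)) [:0, 1/M:]" for n
  have pp: "poly (ps n) t = (\<Sum>k\<le>n. g (real k / real n) * Bernstein n k (t / M))" for n t
    by (simp add: ps_def poly_pcompose poly_sum poly_bp)
  show ?thesis
  proof (intro exI[of _ ps], unfold unif_approx_def, intro allI impI)
    fix e :: real assume e: "e > 0"
    obtain N where N: "\<forall>n x. N \<le> n \<and> x \<in> {0..1} \<longrightarrow>
        \<bar>g x - (\<Sum>k\<le>n. g(k/n) * Bernstein n k x)\<bar> < e"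
      using Bernstein_Weierstrass[OF g e] by blast
    show "\<exists>N. \<forall>n\<ge>N. \<forall>t\<in>{0..M}. \<bar>poly (ps n) t - f t\<bar> < e"
    proof (intro exI allI impI ballI)
      fix n t assume n: "N \<le> n" and t: "t \<in> {0..M}"
      have "t / M \<in> {0..1}" using t M by auto
      then have "\<bar>g (t/M) - (\<Sum>k\<le>n. g(k/n) * Bernstein n k (t/M))\<bar> < e" using N n by blast
      moreover have "g (t / M) = f t" using M by (simp add: g_def)
      ultimately show "\<bar>poly (ps n) t - f t\<bar> < e" by (simp add: pp abs_minus_commute)
    qed
  qed
qed

lemma unif_approx_mono:
  "unif_approx f M ps \<Longrightarrow> M' \<le> M \<Longrightarrow> unif_approx f M' ps"
  unfolding unif_approx_def by (meson atLeastAtMost_iff order_trans)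

section \<open>Existence and characterisation of the functional calculus\<close>

lemma poly_op_diff_bound:
  assumes P: "pos P" and pq: "\<And>t. 0 \<le> t \<Longrightarrow> t \<le> onorm P \<Longrightarrow> \<bar>poly p t - poly q t\<bar> \<le> e"
  shows "norm (poly_op p P x - poly_op q P x) \<le> e * norm x"
proof -
  have Pl: "bounded_linear P" using P by (simp add: pos_bcl bcl_bl)
  have "norm (poly_op (p - q) P x) \<le> e * norm x"
    by (rule poly_op_norm_le[OF P]) (use pq in simp)
  then show ?thesis by (simp add: poly_op_diff[OF Pl])
qed

lemma unif_approx_close:
  assumes a: "unif_approx f M ps" "unif_approx f M qs" and d: "d > 0"
  shows "\<exists>N. \<forall>n\<ge>N. \<forall>m\<ge>N. \<forall>t. 0 \<le> t \<longrightarrow> t \<le> M \<longrightarrow> \<bar>poly (ps n) t - poly (qs m) t\<bar> \<le> d"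
proof -
  obtain N1 where N1: "\<forall>n\<ge>N1. \<forall>t\<in>{0..M}. \<bar>poly (ps n) t - f t\<bar> < d/2"
    using a(1) d unfolding unif_approx_def by (meson half_gt_zero)
  obtain N2 where N2: "\<forall>n\<ge>N2. \<forall>t\<in>{0..M}. \<bar>poly (qs n) t - f t\<bar> < d/2"
    using a(2) d unfolding unif_approx_def by (meson half_gt_zero)
  show ?thesis
  proof (intro exI[of _ "max N1 N2"] allI impI)
    fix n m t assume "max N1 N2 \<le> n" "max N1 N2 \<le> m" "0 \<le> t" "t \<le> M"
    then have "\<bar>poly (ps n) t - f t\<bar> < d/2" "\<bar>poly (qs m) t - f t\<bar> < d/2"
      using N1 N2 by auto
    then show "\<bar>poly (ps n) t - poly (qs m) t\<bar> \<le> d" by linarith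
  qed
qed

lemma cfc_char:
  fixes P :: "'a::{complex_inner, complete_space} \<Rightarrow> 'a"
  assumes P: "pos P" and f: "continuous_on {0..onorm P} f"
  shows "bounded_linear (cfc f P) \<and> (\<forall>ps. unif_approx f (onorm P) ps \<longrightarrow>
     (\<forall>d>0. \<exists>N. \<forall>n\<ge>N. \<forall>x. norm (poly_op (ps n) P x - cfc f P x) \<le> d * norm x))"
proof -
  let ?M = "onorm P"
  have Pl: "bounded_linear P" using P by (simp add: pos_bcl bcl_bl)
  have M0: "0 \<le> ?M" using bcl_onorm_nonneg[OF pos_bcl[OF P]] .
  obtain ps0 where ps0: "unif_approx f ?M ps0" using unif_approx_exists[OF f M0] by blast
  have close: "\<exists>N. \<forall>n\<ge>N. \<forall>m\<ge>N. \<forall>x. norm (poly_op (ps n) P x - poly_op (qs m) P x) \<le> d * norm x"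
    if a: "unif_approx f ?M ps" "unif_approx f ?M qs" "d > 0" for ps qs d
  proof -
    obtain N where N: "\<forall>n\<ge>N. \<forall>m\<ge>N. \<forall>t. 0 \<le> t \<longrightarrow> t \<le> ?M \<longrightarrow> \<bar>poly (ps n) t - poly (qs m) t\<bar> \<le> d"
      using unif_approx_close[OF a] by blast
    show ?thesis using poly_op_diff_bound[OF P] N by blast
  qed
  have conv: "convergent (\<lambda>n. poly_op (ps0 n) P x)" for x
  proof -
    have "Cauchy (\<lambda>n. poly_op (ps0 n) P x)"
    proof (rule CauchyI)
      fix e :: real assume e: "0 < e"
      define d where "d = e / (norm x + 1)"
      have d: "d > 0" using e by (simp add: d_def add_nonneg_pos)
      obtain N where N: "\<forall>n\<ge>N. \<forall>m\<ge>N. \<forall>x. norm (poly_op (ps0 n) P x - poly_op (ps0 m) P x) \<le> d * norm x"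
        using close[OF ps0 ps0 d] by blast
      have "d * norm x < e"
      proof -
        have "e * norm x < e * (norm x + 1)" using e by simp
        then show ?thesis unfolding d_def by (simp add: divide_less_eq add_nonneg_pos)
      qed
      then show "\<exists>M. \<forall>m\<ge>M. \<forall>n\<ge>M. norm (poly_op (ps0 m) P x - poly_op (ps0 n) P x) < e"
        using N by (meson le_less_trans)
    qed
    then show ?thesis by (simp add: Cauchy_convergent_iff)
  qed
  define X where "X x = lim (\<lambda>n. poly_op (ps0 n) P x)" for x
  have Xlim: "(\<lambda>n. poly_op (ps0 n) P x) \<longlonglongrightarrow> X x" for x
    unfolding X_def using conv convergent_LIMSEQ_iff by blast
  have unif: "\<exists>N. \<forall>n\<ge>N. \<forall>x. norm (poly_op (ps n) P x - X x) \<le> d * norm x"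
    if ps: "unif_approx f ?M ps" and d: "d > 0" for ps d
  proof -
    obtain N where N: "\<forall>n\<ge>N. \<forall>m\<ge>N. \<forall>x. norm (poly_op (ps n) P x - poly_op (ps0 m) P x) \<le> d * norm x"
      using close[OF ps ps0 d] by blast
    have "norm (poly_op (ps n) P x - X x) \<le> d * norm x" if n: "n \<ge> N" for n x
    proof -
      have "(\<lambda>m. norm (poly_op (ps n) P x - poly_op (ps0 m) P x)) \<longlonglongrightarrow> norm (poly_op (ps n) P x - X x)"
        by (intro tendsto_norm tendsto_diff tendsto_const Xlim)
      moreover have "\<forall>\<^sub>F m in sequentially. norm (poly_op (ps n) P x - poly_op (ps0 m) P x) \<le> d * norm x"
        using eventually_ge_at_top[of N] by eventually_elim (use N n in blast)
      ultimately show ?thesis by (rule tendsto_upperbound) simp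
    qed
    then show ?thesis by blast
  qed
  obtain N where N: "\<forall>n\<ge>N. \<forall>x. norm (poly_op (ps0 n) P x - X x) \<le> 1 * norm x"
    using unif[OF ps0, of 1] by auto
  have Xl: "bounded_linear X"
  proof (rule bounded_linear_intro)
    fix x y
    have "(\<lambda>n. poly_op (ps0 n) P (x + y)) \<longlonglongrightarrow> X x + X y"
      using tendsto_add[OF Xlim[of x] Xlim[of y]] by (simp add: bl_add[OF poly_op_bl[OF Pl]])
    then show "X (x + y) = X x + X y" using Xlim LIMSEQ_unique by blast
  next
    fix r x
    have "(\<lambda>n. poly_op (ps0 n) P (r *\<^sub>R x)) \<longlonglongrightarrow> r *\<^sub>R X x"
      using tendsto_scaleR[OF tendsto_const[of r] Xlim[of x]] by (simp add: bl_scaleR[OF poly_op_bl[OF Pl]])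
    then show "X (r *\<^sub>R x) = r *\<^sub>R X x" using Xlim LIMSEQ_unique by blast
  next
    fix x
    have "norm (X x) \<le> norm (poly_op (ps0 N) P x - X x) + norm (poly_op (ps0 N) P x)"
      using norm_triangle_ineq4[of "poly_op (ps0 N) P x" "poly_op (ps0 N) P x - X x"] by simp
    also have "\<dots> \<le> norm x + onorm (poly_op (ps0 N) P) * norm x"
      using N onorm[OF poly_op_bl[OF Pl]] by (metis add_mono mult_1 order_refl)
    finally show "norm (X x) \<le> norm x * (1 + onorm (poly_op (ps0 N) P))"
      by (simp add: algebra_simps)
  qed
  have Xprop: "bounded_linear X \<and> (\<forall>ps. unif_approx f ?M ps \<longrightarrow>
      (\<lambda>n. onorm (\<lambda>x. poly_op (ps n) P x - X x)) \<longlonglongrightarrow> 0)"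
  proof (intro conjI allI impI Xl)
    fix ps assume ps: "unif_approx f ?M ps"
    show "(\<lambda>n. onorm (\<lambda>x. poly_op (ps n) P x - X x)) \<longlonglongrightarrow> 0"
    proof (rule LIMSEQ_I)
      fix r :: real assume r: "0 < r"
      obtain N where N: "\<forall>n\<ge>N. \<forall>x. norm (poly_op (ps n) P x - X x) \<le> (r/2) * norm x"
        using unif[OF ps, of "r/2"] r by auto
      have "norm (onorm (\<lambda>x. poly_op (ps n) P x - X x) - 0) < r" if "n \<ge> N" for n
      proof -
        have bl: "bounded_linear (\<lambda>x. poly_op (ps n) P x - X x)"
          by (rule bounded_linear_sub[OF poly_op_bl[OF Pl] Xl])
        have "onorm (\<lambda>x. poly_op (ps n) P x - X x) \<le> r/2"
          by (rule onorm_bound) (use r N that in auto)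
        moreover have "0 \<le> onorm (\<lambda>x. poly_op (ps n) P x - X x)" by (rule onorm_pos_le[OF bl])
        ultimately show ?thesis using r by simp
      qed
      then show "\<exists>no. \<forall>n\<ge>no. norm (onorm (\<lambda>x. poly_op (ps n) P x - X x) - 0) < r" by blast
    qed
  qed
  have "cfc f P = X"
    unfolding cfc_def unif_approx_def[symmetric]
  proof (rule the_equality)
    show "bounded_linear X \<and> (\<forall>ps. unif_approx f ?M ps \<longrightarrow>
      (\<lambda>n. onorm (\<lambda>x. poly_op (ps n) P x - X x)) \<longlonglongrightarrow> 0)" by (rule Xprop)
  next
    fix Y assume Y: "bounded_linear Y \<and> (\<forall>ps. unif_approx f ?M ps \<longrightarrow>
      (\<lambda>n. onorm (\<lambda>x. poly_op (ps n) P x - Y x)) \<longlonglongrightarrow> 0)"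
    then have o: "(\<lambda>n. onorm (\<lambda>x. poly_op (ps0 n) P x - Y x)) \<longlonglongrightarrow> 0" using ps0 by blast
    show "Y = X"
    proof
      fix x
      have "(\<lambda>n. norm (poly_op (ps0 n) P x - Y x)) \<longlonglongrightarrow> 0"
      proof (rule tendsto_sandwich[where f="\<lambda>n. 0" and h="\<lambda>n. onorm (\<lambda>x. poly_op (ps0 n) P x - Y x) * norm x"])
        show "\<forall>\<^sub>F n in sequentially. 0 \<le> norm (poly_op (ps0 n) P x - Y x)" by simp
        show "\<forall>\<^sub>F n in sequentially. norm (poly_op (ps0 n) P x - Y x) \<le> onorm (\<lambda>x. poly_op (ps0 n) P x - Y x) * norm x"
          using onorm[OF bounded_linear_sub[OF poly_op_bl[OF Pl]]] Y by auto
        show "(\<lambda>n. 0) \<longlonglongrightarrow> (0::real)" by simp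
        show "(\<lambda>n. onorm (\<lambda>x. poly_op (ps0 n) P x - Y x) * norm x) \<longlonglongrightarrow> 0"
          using tendsto_mult[OF o tendsto_const[of "norm x"]] by simp
      qed
      then have "(\<lambda>n. poly_op (ps0 n) P x) \<longlonglongrightarrow> Y x"
        using tendsto_norm_zero_iff LIM_zero_cancel by blast
      then show "Y x = X x" using Xlim LIMSEQ_unique by blast
    qed
  qed
  then show ?thesis using Xl unif by auto
qed

lemma tendsto_cinner_left:
  assumes "(f \<longlongrightarrow> a) F"
  shows "((\<lambda>n. cinner (f n) (y::'a::complex_inner)) \<longlongrightarrow> cinner a y) F"
proof -
  have "((\<lambda>n. f n - a) \<longlongrightarrow> 0) F" using LIM_zero[OF assms] .
  then have "((\<lambda>n. cinner (f n - a) y) \<longlongrightarrow> 0) F"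
    by (rule tendsto_0_le[where K="norm y"]) (simp add: Cauchy_Schwarz_c)
  then show ?thesis by (simp add: cinner_diff_left LIM_zero_cancel)
qed

lemma tendsto_cinner_right:
  assumes "(f \<longlongrightarrow> a) F"
  shows "((\<lambda>n. cinner (y::'a::complex_inner) (f n)) \<longlongrightarrow> cinner y a) F"
proof -
  have "((\<lambda>n. f n - a) \<longlongrightarrow> 0) F" using LIM_zero[OF assms] .
  then have "((\<lambda>n. cinner y (f n - a)) \<longlongrightarrow> 0) F"
    by (rule tendsto_0_le[where K="norm y"]) (simp add: Cauchy_Schwarz_c mult.commute)
  then show ?thesis by (simp add: cinner_diff_right LIM_zero_cancel)
qed

lemma norm_scaleC: "norm (scaleC c (x::'a::complex_inner)) = cmod c * norm x"
proof -
  have "(norm (scaleC c x))^2 = (cmod c * norm x)^2"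
    unfolding Re_cinner_self[symmetric] cinner_scaleC_left cinner_scaleC_right
    by (simp add: cinner_self power_mult_distrib complex_norm_square mult.assoc[symmetric])
       (simp add: cmod_power2 power2_eq_square[symmetric])
  then show ?thesis by (simp add: power2_eq_iff_nonneg)
qed

lemma tendsto_scaleC:
  assumes "(f \<longlongrightarrow> a) F"
  shows "((\<lambda>n. scaleC c (f n :: 'a::complex_inner)) \<longlongrightarrow> scaleC c a) F"
proof -
  have "((\<lambda>n. f n - a) \<longlongrightarrow> 0) F" using LIM_zero[OF assms] .
  then have "((\<lambda>n. scaleC c (f n - a)) \<longlongrightarrow> 0) F"
    by (rule tendsto_0_le[where K="cmod c"]) (simp add: norm_scaleC mult.commute)
  then show ?thesis by (simp add: scaleC_diff_right LIM_zero_cancel)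
qed

section \<open>Properties of the functional calculus\<close>

context
  fixes P :: "'a::{complex_inner, complete_space} \<Rightarrow> 'a"
  assumes P: "pos P"
begin

lemma P_bl: "bounded_linear P" using P by (simp add: pos_bcl bcl_bl)
lemma P_bcl: "bounded_clinear P" using P by (simp add: pos_bcl)
lemma M0: "0 \<le> onorm P" using bcl_onorm_nonneg[OF P_bcl] .

lemma cfc_bl: "continuous_on {0..onorm P} f \<Longrightarrow> bounded_linear (cfc f P)"
  using cfc_char[OF P] by blast

lemma cfc_lim:
  assumes f: "continuous_on {0..onorm P} f" and ps: "unif_approx f (onorm P) ps"
  shows "(\<lambda>n. poly_op (ps n) P x) \<longlonglongrightarrow> cfc f P x"
proof (rule LIMSEQ_I)
  fix r :: real assume r: "0 < r"
  define d where "d = r / (2 * (norm x + 1))"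
  have d: "d > 0" using r by (simp add: d_def add_nonneg_pos)
  obtain N where N: "\<forall>n\<ge>N. \<forall>x. norm (poly_op (ps n) P x - cfc f P x) \<le> d * norm x"
    using cfc_char[OF P f] ps d by blast
  have "d * norm x < r"
  proof -
    have q: "norm x / (2 * (norm x + 1)) < 1"
    proof -
      have "norm x < 2 * (norm x + 1)" by (smt (verit) norm_ge_zero)
      then show ?thesis by (simp add: divide_less_eq add_nonneg_pos)
    qed
    have "d * norm x = r * (norm x / (2 * (norm x + 1)))" by (simp add: d_def)
    also have "\<dots> < r * 1" by (rule mult_strict_left_mono[OF q r])
    finally show ?thesis by simp
  qed
  then show "\<exists>no. \<forall>n\<ge>no. norm (poly_op (ps n) P x - cfc f P x) < r"
    using N by (meson le_less_trans)
qed

lemma approx_ex: "continuous_on {0..onorm P} f \<Longrightarrow> \<exists>ps. unif_approx f (onorm P) ps"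
  using unif_approx_exists M0 by blast

lemma cfc_cong:
  assumes "\<And>t. 0 \<le> t \<Longrightarrow> t \<le> onorm P \<Longrightarrow> f t = g t"
  shows "cfc f P = cfc g P"
proof -
  have "unif_approx f (onorm P) = unif_approx g (onorm P)"
    using assms unfolding unif_approx_def fun_eq_iff by auto
  then show ?thesis unfolding cfc_def unif_approx_def[symmetric] by simp
qed

lemma cfc_poly: "cfc (poly u) P x = poly_op u P x"
proof -
  have "unif_approx (poly u) (onorm P) (\<lambda>n. u)" by (simp add: unif_approx_def)
  from cfc_lim[OF _ this] show ?thesis by (simp add: continuous_on_poly LIMSEQ_const_iff)
qed

lemma cfc_const: "cfc (\<lambda>t. c) P x = c *\<^sub>R x"
proof -
  have "poly [:c:] = (\<lambda>t::real. c)" by (simp add: fun_eq_iff)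
  then show ?thesis using cfc_poly[of "[:c:]" x] by simp
qed

lemma cfc_id: "cfc (\<lambda>t. t) P x = P x"
proof -
  have "poly [:0,1:] = (\<lambda>t::real. t)" by (simp add: fun_eq_iff)
  then show ?thesis using cfc_poly[of "[:0,1:]" x] by (simp add: P_bl)
qed

lemma unif_approx_add:
  "unif_approx f M ps \<Longrightarrow> unif_approx g M qs \<Longrightarrow> unif_approx (\<lambda>t. f t + g t) M (\<lambda>n. ps n + qs n)"
  unfolding unif_approx_def
proof (intro allI impI)
  fix e :: real assume a: "\<forall>e>0. \<exists>N. \<forall>n\<ge>N. \<forall>t\<in>{0..M}. \<bar>poly (ps n) t - f t\<bar> < e"
     "\<forall>e>0. \<exists>N. \<forall>n\<ge>N. \<forall>t\<in>{0..M}. \<bar>poly (qs n) t - g t\<bar> < e" and e: "0 < e"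
  obtain N1 where N1: "\<forall>n\<ge>N1. \<forall>t\<in>{0..M}. \<bar>poly (ps n) t - f t\<bar> < e/2" using a(1) e by (meson half_gt_zero)
  obtain N2 where N2: "\<forall>n\<ge>N2. \<forall>t\<in>{0..M}. \<bar>poly (qs n) t - g t\<bar> < e/2" using a(2) e by (meson half_gt_zero)
  show "\<exists>N. \<forall>n\<ge>N. \<forall>t\<in>{0..M}. \<bar>poly (ps n + qs n) t - (f t + g t)\<bar> < e"
  proof (intro exI[of _ "max N1 N2"] allI impI ballI)
    fix n t assume "max N1 N2 \<le> n" "t \<in> {0..M}"
    then have "\<bar>poly (ps n) t - f t\<bar> < e/2" "\<bar>poly (qs n) t - g t\<bar> < e/2" using N1 N2 by auto
    then show "\<bar>poly (ps n + qs n) t - (f t + g t)\<bar> < e" by (simp only: poly_add)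
  qed
qed

lemma unif_approx_scale:
  "unif_approx f M ps \<Longrightarrow> unif_approx (\<lambda>t. c * f t) M (\<lambda>n. smult c (ps n))"
  unfolding unif_approx_def
proof (intro allI impI)
  fix e :: real assume a: "\<forall>e>0. \<exists>N. \<forall>n\<ge>N. \<forall>t\<in>{0..M}. \<bar>poly (ps n) t - f t\<bar> < e" and e: "0 < e"
  have e': "e / (\<bar>c\<bar> + 1) > 0" using e by (simp add: add_nonneg_pos)
  obtain N where N: "\<forall>n\<ge>N. \<forall>t\<in>{0..M}. \<bar>poly (ps n) t - f t\<bar> < e / (\<bar>c\<bar> + 1)" using a e' by blast
  show "\<exists>N. \<forall>n\<ge>N. \<forall>t\<in>{0..M}. \<bar>poly (smult c (ps n)) t - c * f t\<bar> < e"
  proof (intro exI[of _ N] allI impI ballI)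
    fix n t assume "N \<le> n" "t \<in> {0..M}"
    then have h: "\<bar>poly (ps n) t - f t\<bar> < e / (\<bar>c\<bar> + 1)" using N by auto
    have "\<bar>poly (smult c (ps n)) t - c * f t\<bar> = \<bar>c\<bar> * \<bar>poly (ps n) t - f t\<bar>"
      by (simp add: abs_mult[symmetric] algebra_simps)
    also have "\<dots> \<le> (\<bar>c\<bar> + 1) * \<bar>poly (ps n) t - f t\<bar>" by (simp add: mult_right_mono)
    also have "\<dots> < (\<bar>c\<bar> + 1) * (e / (\<bar>c\<bar> + 1))"
      by (rule mult_strict_left_mono[OF h]) (simp add: add_nonneg_pos)
    also have "\<dots> = e" by (simp add: add_nonneg_pos)
    finally show "\<bar>poly (smult c (ps n)) t - c * f t\<bar> < e" .
  qed
qed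

lemma cfc_add:
  assumes f: "continuous_on {0..onorm P} f" and g: "continuous_on {0..onorm P} g"
  shows "cfc (\<lambda>t. f t + g t) P x = cfc f P x + cfc g P x"
proof -
  obtain ps qs where ps: "unif_approx f (onorm P) ps" and qs: "unif_approx g (onorm P) qs"
    using approx_ex[OF f] approx_ex[OF g] by blast
  have fg: "continuous_on {0..onorm P} (\<lambda>t. f t + g t)" by (intro continuous_intros f g)
  have "(\<lambda>n. poly_op (ps n + qs n) P x) \<longlonglongrightarrow> cfc (\<lambda>t. f t + g t) P x"
    by (rule cfc_lim[OF fg unif_approx_add[OF ps qs]])
  moreover have "(\<lambda>n. poly_op (ps n + qs n) P x) \<longlonglongrightarrow> cfc f P x + cfc g P x"
    unfolding poly_op_add[OF P_bl] by (intro tendsto_add cfc_lim f g ps qs)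
  ultimately show ?thesis using LIMSEQ_unique by blast
qed

lemma cfc_scale:
  assumes f: "continuous_on {0..onorm P} f"
  shows "cfc (\<lambda>t. c * f t) P x = c *\<^sub>R cfc f P x"
proof -
  obtain ps where ps: "unif_approx f (onorm P) ps" using approx_ex[OF f] by blast
  have cf: "continuous_on {0..onorm P} (\<lambda>t. c * f t)" by (intro continuous_intros f)
  have "(\<lambda>n. poly_op (smult c (ps n)) P x) \<longlonglongrightarrow> cfc (\<lambda>t. c * f t) P x"
    by (rule cfc_lim[OF cf unif_approx_scale[OF ps]])
  moreover have "(\<lambda>n. poly_op (smult c (ps n)) P x) \<longlonglongrightarrow> c *\<^sub>R cfc f P x"
    unfolding poly_op_smult[OF P_bl] by (intro tendsto_scaleR tendsto_const cfc_lim f ps)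
  ultimately show ?thesis using LIMSEQ_unique by blast
qed

lemma cfc_diff:
  assumes f: "continuous_on {0..onorm P} f" and g: "continuous_on {0..onorm P} g"
  shows "cfc (\<lambda>t. f t - g t) P x = cfc f P x - cfc g P x"
proof -
  have g': "continuous_on {0..onorm P} (\<lambda>t. (-1) * g t)" by (intro continuous_intros g)
  show ?thesis using cfc_add[OF f g', of x] cfc_scale[OF g, of "-1" x] by simp
qed

lemma cfc_norm_le:
  assumes f: "continuous_on {0..onorm P} f" and c: "\<And>t. 0 \<le> t \<Longrightarrow> t \<le> onorm P \<Longrightarrow> \<bar>f t\<bar> \<le> c"
  shows "norm (cfc f P x) \<le> c * norm x"
proof -
  obtain ps where ps: "unif_approx f (onorm P) ps" using approx_ex[OF f] by blast
  have "norm (cfc f P x) \<le> c * norm x + e * norm x" if e: "e > 0" for e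
  proof -
    obtain N where N: "\<forall>n\<ge>N. \<forall>t\<in>{0..onorm P}. \<bar>poly (ps n) t - f t\<bar> < e"
      using ps e unfolding unif_approx_def by blast
    have "norm (poly_op (ps n) P x) \<le> (c + e) * norm x" if "n \<ge> N" for n
    proof (rule poly_op_norm_le[OF P])
      fix t assume "0 \<le> t" "t \<le> onorm P"
      then have "\<bar>poly (ps n) t - f t\<bar> < e" "\<bar>f t\<bar> \<le> c" using N that c by auto
      then show "\<bar>poly (ps n) t\<bar> \<le> c + e" by linarith
    qed
    then have "norm (cfc f P x) \<le> (c + e) * norm x"
      using tendsto_norm[OF cfc_lim[OF f ps, of x]]
      by (intro tendsto_upperbound[where F=sequentially]) (auto simp: eventually_at_top_linorder)
    then show ?thesis by (simp add: algebra_simps)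
  qed
  then have "norm (cfc f P x) \<le> c * norm x + e" if "e > 0" for e
  proof -
    have "e / (norm x + 1) > 0" using that by (simp add: add_nonneg_pos)
    then have "norm (cfc f P x) \<le> c * norm x + e / (norm x + 1) * norm x"
      using \<open>\<And>e. e > 0 \<Longrightarrow> _\<close> by blast
    also have "e / (norm x + 1) * norm x \<le> e"
      using that by (simp add: divide_le_eq add_nonneg_pos mult_left_mono)
    finally show ?thesis by simp
  qed
  then show ?thesis by (rule field_le_epsilon)
qed

lemma cfc_Re_nonneg:
  assumes f: "continuous_on {0..onorm P} f" and nn: "\<And>t. 0 \<le> t \<Longrightarrow> t \<le> onorm P \<Longrightarrow> 0 \<le> f t"
  shows "0 \<le> Re (cinner (cfc f P x) x)"
proof -
  obtain ps where ps: "unif_approx f (onorm P) ps" using approx_ex[OF f] by blast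
  have "- (e * (norm x)\<^sup>2) \<le> Re (cinner (cfc f P x) x)" if e: "e > 0" for e
  proof -
    obtain N where N: "\<forall>n\<ge>N. \<forall>t\<in>{0..onorm P}. \<bar>poly (ps n) t - f t\<bar> < e"
      using ps e unfolding unif_approx_def by blast
    have "- (e * (norm x)\<^sup>2) \<le> Re (cinner (poly_op (ps n) P x) x)" if n: "n \<ge> N" for n
    proof -
      have "ppos P (ps n + [:e:])"
      proof (rule ppos_onorm[OF P])
        fix t assume "0 \<le> t" "t \<le> onorm P"
        then have "\<bar>poly (ps n) t - f t\<bar> < e" "0 \<le> f t" using N n nn by auto
        then show "0 \<le> poly (ps n + [:e:]) t" by simp
      qed
      then have "0 \<le> Re (cinner (poly_op (ps n + [:e:]) P x) x)" unfolding ppos_def by blast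
      then show ?thesis
        by (simp add: poly_op_add[OF P_bl] cinner_add_left cinner_scaleR_left Re_cinner_self)
    qed
    moreover have L: "(\<lambda>n. Re (cinner (poly_op (ps n) P x) x)) \<longlonglongrightarrow> Re (cinner (cfc f P x) x)"
      by (intro tendsto_Re tendsto_cinner_left cfc_lim f ps)
    ultimately show ?thesis
      by (intro tendsto_lowerbound[OF L]) (auto simp: eventually_at_top_linorder)
  qed
  then have "0 \<le> Re (cinner (cfc f P x) x) + e" if "e > 0" for e
  proof -
    have "e / ((norm x)\<^sup>2 + 1) > 0" using that by (simp add: add_nonneg_pos)
    then have "- (e / ((norm x)\<^sup>2 + 1) * (norm x)\<^sup>2) \<le> Re (cinner (cfc f P x) x)"
      using \<open>\<And>e. e > 0 \<Longrightarrow> _\<close> by blast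
    moreover have "e / ((norm x)\<^sup>2 + 1) * (norm x)\<^sup>2 \<le> e"
      using that by (simp add: divide_le_eq add_nonneg_pos mult_left_mono)
    ultimately show ?thesis by simp
  qed
  then show ?thesis using field_le_epsilon[of 0 "Re (cinner (cfc f P x) x)"] by simp
qed

lemma cfc_selfadj:
  assumes f: "continuous_on {0..onorm P} f"
  shows "selfadj (cfc f P)"
  unfolding selfadj_def
proof (intro allI)
  fix x y
  obtain ps where ps: "unif_approx f (onorm P) ps" using approx_ex[OF f] by blast
  have sa: "cinner (poly_op (ps n) P x) y = cinner x (poly_op (ps n) P y)" for n
    using poly_op_selfadj[OF P_bcl pos_selfadj[OF P]] unfolding selfadj_def by blast
  have "(\<lambda>n. cinner (poly_op (ps n) P x) y) \<longlonglongrightarrow> cinner (cfc f P x) y"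
    by (rule tendsto_cinner_left[OF cfc_lim[OF f ps]])
  moreover have "(\<lambda>n. cinner (poly_op (ps n) P x) y) \<longlonglongrightarrow> cinner x (cfc f P y)"
    unfolding sa by (rule tendsto_cinner_right[OF cfc_lim[OF f ps]])
  ultimately show "cinner (cfc f P x) y = cinner x (cfc f P y)" using LIMSEQ_unique by blast
qed

lemma cfc_bcl:
  assumes f: "continuous_on {0..onorm P} f"
  shows "bounded_clinear (cfc f P)"
  unfolding bounded_clinear_def
proof (intro conjI allI cfc_bl[OF f])
  fix c x
  obtain ps where ps: "unif_approx f (onorm P) ps" using approx_ex[OF f] by blast
  have "(\<lambda>n. poly_op (ps n) P (scaleC c x)) \<longlonglongrightarrow> cfc f P (scaleC c x)" by (rule cfc_lim[OF f ps])
  moreover have "(\<lambda>n. poly_op (ps n) P (scaleC c x)) \<longlonglongrightarrow> scaleC c (cfc f P x)"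
    unfolding bcl_scaleC[OF poly_op_bcl[OF P_bcl]] by (rule tendsto_scaleC[OF cfc_lim[OF f ps]])
  ultimately show "cfc f P (scaleC c x) = scaleC c (cfc f P x)" using LIMSEQ_unique by blast
qed

lemma cfc_pos:
  assumes f: "continuous_on {0..onorm P} f" and nn: "\<And>t. 0 \<le> t \<Longrightarrow> t \<le> onorm P \<Longrightarrow> 0 \<le> f t"
  shows "pos (cfc f P)"
  unfolding pos_def using cfc_bcl[OF f] cfc_selfadj[OF f] cfc_Re_nonneg[OF f nn] by blast

lemma cfc_onorm_le:
  assumes f: "continuous_on {0..onorm P} f" and c: "\<And>t. 0 \<le> t \<Longrightarrow> t \<le> onorm P \<Longrightarrow> \<bar>f t\<bar> \<le> c"
  shows "onorm (cfc f P) \<le> c"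
proof (rule onorm_bound)
  show "0 \<le> c" using c[of 0] M0 by (meson abs_ge_zero order_trans order_refl)
  show "norm (cfc f P x) \<le> c * norm x" for x by (rule cfc_norm_le[OF f c])
qed

lemma cfc_mono:
  assumes f: "continuous_on {0..onorm P} f" and g: "continuous_on {0..onorm P} g"
    and le: "\<And>t. 0 \<le> t \<Longrightarrow> t \<le> onorm P \<Longrightarrow> f t \<le> g t"
  shows "Re (cinner (cfc f P x) x) \<le> Re (cinner (cfc g P x) x)"
proof -
  have "0 \<le> Re (cinner (cfc (\<lambda>t. g t - f t) P x) x)"
    by (rule cfc_Re_nonneg) (use le in \<open>auto intro!: continuous_intros f g\<close>)
  then show ?thesis by (simp add: cfc_diff[OF g f] cinner_diff_left)
qed

end

lemma cont_bounded_interval: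
  assumes "continuous_on {a..b} (f :: real \<Rightarrow> real)"
  shows "\<exists>B\<ge>0. \<forall>t. a \<le> t \<longrightarrow> t \<le> b \<longrightarrow> \<bar>f t\<bar> \<le> B"
proof -
  have "compact (f ` {a..b})" by (rule compact_continuous_image[OF assms compact_Icc])
  then obtain B where B: "B > 0" "\<forall>y\<in>f ` {a..b}. norm y \<le> B"
    using compact_imp_bounded bounded_pos by blast
  then show ?thesis by (intro exI[of _ B]) auto
qed

lemma unif_approx_mult:
  assumes ps: "unif_approx f M ps" and qs: "unif_approx g M qs"
    and Bf: "\<And>t. 0 \<le> t \<Longrightarrow> t \<le> M \<Longrightarrow> \<bar>f t\<bar> \<le> Bf" and Bg: "\<And>t. 0 \<le> t \<Longrightarrow> t \<le> M \<Longrightarrow> \<bar>g t\<bar> \<le> Bg"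
  shows "unif_approx (\<lambda>t. f t * g t) M (\<lambda>n. ps n * qs n)"
  unfolding unif_approx_def
proof (intro allI impI)
  fix e :: real assume e: "0 < e"
  have Bf0: "0 \<le> Bf" and Bg0: "0 \<le> Bg" if "0 \<le> M"
    using Bf[of 0] Bg[of 0] that by auto
  define d where "d = min 1 (e / (\<bar>Bf\<bar> + \<bar>Bg\<bar> + 2))"
  have pos: "0 < \<bar>Bf\<bar> + \<bar>Bg\<bar> + 2" by (smt (verit) abs_ge_zero)
  have d1: "d \<le> e / (\<bar>Bf\<bar> + \<bar>Bg\<bar> + 2)" by (simp add: d_def)
  have d: "d > 0" "d \<le> 1" "d * (\<bar>Bf\<bar> + \<bar>Bg\<bar> + 2) \<le> e"
    using e pos mult_right_mono[OF d1, of "\<bar>Bf\<bar> + \<bar>Bg\<bar> + 2"] by (auto simp: d_def)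
  obtain N1 where N1: "\<forall>n\<ge>N1. \<forall>t\<in>{0..M}. \<bar>poly (ps n) t - f t\<bar> < d"
    using ps d unfolding unif_approx_def by blast
  obtain N2 where N2: "\<forall>n\<ge>N2. \<forall>t\<in>{0..M}. \<bar>poly (qs n) t - g t\<bar> < d"
    using qs d unfolding unif_approx_def by blast
  show "\<exists>N. \<forall>n\<ge>N. \<forall>t\<in>{0..M}. \<bar>poly (ps n * qs n) t - f t * g t\<bar> < e"
  proof (intro exI[of _ "max N1 N2"] allI impI ballI)
    fix n t assume n: "max N1 N2 \<le> n" and t: "t \<in> {0..M}"
    have a: "\<bar>poly (ps n) t - f t\<bar> < d" and b: "\<bar>poly (qs n) t - g t\<bar> < d"
      using N1 N2 n t by auto
    have f: "\<bar>f t\<bar> \<le> \<bar>Bf\<bar>" and g: "\<bar>g t\<bar> \<le> \<bar>Bg\<bar>" using Bf Bg t by fastforce+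
    have pn: "\<bar>poly (ps n) t\<bar> \<le> \<bar>Bf\<bar> + 1" using a f d by linarith
    have "poly (ps n * qs n) t - f t * g t =
        poly (ps n) t * (poly (qs n) t - g t) + (poly (ps n) t - f t) * g t"
      by (simp add: algebra_simps)
    then have "\<bar>poly (ps n * qs n) t - f t * g t\<bar> \<le>
        \<bar>poly (ps n) t\<bar> * \<bar>poly (qs n) t - g t\<bar> + \<bar>poly (ps n) t - f t\<bar> * \<bar>g t\<bar>"
      by (metis abs_mult abs_triangle_ineq)
    also have "\<dots> \<le> (\<bar>Bf\<bar> + 1) * d + d * \<bar>Bg\<bar>"
      by (intro add_mono mult_mono) (use pn a b g in auto)
    also have "\<dots> < e" using d by (simp add: algebra_simps)
    finally show "\<bar>poly (ps n * qs n) t - f t * g t\<bar> < e" .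
  qed
qed

context
  fixes P :: "'a::{complex_inner, complete_space} \<Rightarrow> 'a"
  assumes P: "pos P"
begin

lemma cfc_mult:
  assumes f: "continuous_on {0..onorm P} f" and g: "continuous_on {0..onorm P} g"
  shows "cfc (\<lambda>t. f t * g t) P x = cfc f P (cfc g P x)"
proof -
  obtain ps qs where ps: "unif_approx f (onorm P) ps" and qs: "unif_approx g (onorm P) qs"
    using approx_ex[OF P f] approx_ex[OF P g] by blast
  obtain Bf where Bf: "Bf \<ge> 0" "\<forall>t. 0 \<le> t \<longrightarrow> t \<le> onorm P \<longrightarrow> \<bar>f t\<bar> \<le> Bf"
    using cont_bounded_interval[OF f] by blast
  obtain Bg where Bg: "\<forall>t. 0 \<le> t \<longrightarrow> t \<le> onorm P \<longrightarrow> \<bar>g t\<bar> \<le> Bg"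
    using cont_bounded_interval[OF g] by blast
  have fg: "continuous_on {0..onorm P} (\<lambda>t. f t * g t)" by (intro continuous_intros f g)
  have L1: "(\<lambda>n. poly_op (ps n * qs n) P x) \<longlonglongrightarrow> cfc (\<lambda>t. f t * g t) P x"
    by (rule cfc_lim[OF P fg unif_approx_mult[OF ps qs]]) (use Bf Bg in auto)
  obtain N where N: "\<forall>n\<ge>N. \<forall>t\<in>{0..onorm P}. \<bar>poly (ps n) t - f t\<bar> < 1"
    using ps unfolding unif_approx_def by (meson zero_less_one)
  have nb: "norm (poly_op (ps n) P y) \<le> (Bf + 1) * norm y" if "n \<ge> N" for n y
  proof (rule poly_op_norm_le[OF P])
    fix t assume "0 \<le> t" "t \<le> onorm P"
    then have "\<bar>poly (ps n) t - f t\<bar> < 1" "\<bar>f t\<bar> \<le> Bf" using N that Bf by auto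
    then show "\<bar>poly (ps n) t\<bar> \<le> Bf + 1" by linarith
  qed
  have t1: "(\<lambda>n. poly_op (ps n) P (poly_op (qs n) P x - cfc g P x)) \<longlonglongrightarrow> 0"
  proof (rule tendsto_0_le[where K="Bf + 1"])
    show "(\<lambda>n. poly_op (qs n) P x - cfc g P x) \<longlonglongrightarrow> 0" by (rule LIM_zero[OF cfc_lim[OF P g qs]])
    show "\<forall>\<^sub>F n in sequentially. norm (poly_op (ps n) P (poly_op (qs n) P x - cfc g P x))
        \<le> norm (poly_op (qs n) P x - cfc g P x) * (Bf + 1)"
      using eventually_ge_at_top[of N] by eventually_elim (metis nb mult.commute)
  qed
  have t2: "(\<lambda>n. poly_op (ps n) P (cfc g P x) - cfc f P (cfc g P x)) \<longlonglongrightarrow> 0"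
    by (rule LIM_zero[OF cfc_lim[OF P f ps]])
  have "(\<lambda>n. poly_op (ps n) P (poly_op (qs n) P x - cfc g P x) +
      (poly_op (ps n) P (cfc g P x) - cfc f P (cfc g P x))) \<longlonglongrightarrow> 0"
    using tendsto_add[OF t1 t2] by simp
  then have "(\<lambda>n. poly_op (ps n * qs n) P x - cfc f P (cfc g P x)) \<longlonglongrightarrow> 0"
    by (simp add: poly_op_mult[OF P_bl[OF P]] bl_diff[OF poly_op_bl[OF P_bl[OF P]]])
  then have "(\<lambda>n. poly_op (ps n * qs n) P x) \<longlonglongrightarrow> cfc f P (cfc g P x)"
    by (rule LIM_zero_cancel)
  with L1 show ?thesis using LIMSEQ_unique by blast
qed

lemma cfc_poly_comp:
  assumes f: "continuous_on {0..onorm P} f" and nn: "\<And>t. 0 \<le> t \<Longrightarrow> t \<le> onorm P \<Longrightarrow> 0 \<le> f t"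
  shows "poly_op q (cfc f P) x = cfc (\<lambda>t. poly q (f t)) P x"
proof (induction q arbitrary: x rule: pCons_induct)
  case 0
  have "cfc (\<lambda>t. poly 0 (f t)) P x = cfc (\<lambda>t. 0) P x" by simp
  then show ?case using cfc_const[OF P, of 0 x] by simp
next
  case (pCons a q)
  have Fl: "bounded_linear (cfc f P)" by (rule cfc_bl[OF P f])
  have cq: "continuous_on {0..onorm P} (\<lambda>t. poly q (f t))"
    by (rule continuous_on_poly[OF f])
  have "cfc (\<lambda>t. poly (pCons a q) (f t)) P x = cfc (\<lambda>t. a + f t * poly q (f t)) P x" by simp
  also have "\<dots> = a *\<^sub>R x + cfc f P (cfc (\<lambda>t. poly q (f t)) P x)"
    using cfc_add[OF P continuous_on_const, of "\<lambda>t. f t * poly q (f t)" a x]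
      cfc_const[OF P, of a x] cfc_mult[OF f cq, of x]
    by (simp add: continuous_on_mult[OF f cq])
  also have "\<dots> = poly_op (pCons a q) (cfc f P) x"
    by (simp add: poly_op_pCons[OF Fl] pCons.IH)
  finally show ?case ..
qed

lemma cfc_comp:
  assumes f: "continuous_on {0..onorm P} f" and nn: "\<And>t. 0 \<le> t \<Longrightarrow> t \<le> onorm P \<Longrightarrow> 0 \<le> f t"
    and g: "continuous_on {0..} g"
  shows "cfc g (cfc f P) x = cfc (\<lambda>t. g (f t)) P x"
proof -
  let ?F = "cfc f P"
  have F: "pos ?F" by (rule cfc_pos[OF P f nn])
  obtain B where B: "B \<ge> 0" "\<forall>t. 0 \<le> t \<longrightarrow> t \<le> onorm P \<longrightarrow> \<bar>f t\<bar> \<le> B"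
    using cont_bounded_interval[OF f] by blast
  have oF: "onorm ?F \<le> B" by (rule cfc_onorm_le[OF P f]) (use B in auto)
  have gB: "continuous_on {0..B} g" using g by (rule continuous_on_subset) auto
  obtain qs where qs: "unif_approx g B qs" using unif_approx_exists[OF gB B(1)] by blast
  have gF: "continuous_on {0..onorm ?F} g" using g by (rule continuous_on_subset) auto
  have L1: "(\<lambda>n. poly_op (qs n) ?F x) \<longlonglongrightarrow> cfc g ?F x"
    by (rule cfc_lim[OF F gF unif_approx_mono[OF qs oF]])
  have gf: "continuous_on {0..onorm P} (\<lambda>t. g (f t))"
    by (rule continuous_on_compose2[OF g f]) (use nn in auto)
  have cq: "continuous_on {0..onorm P} (\<lambda>t. poly (qs n) (f t))" for n
    by (rule continuous_on_poly[OF f])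
  have L2: "(\<lambda>n. poly_op (qs n) ?F x) \<longlonglongrightarrow> cfc (\<lambda>t. g (f t)) P x"
  proof (rule LIMSEQ_I)
    fix r :: real assume r: "0 < r"
    define e where "e = r / (2 * (norm x + 1))"
    have e: "e > 0" using r by (simp add: e_def add_nonneg_pos)
    obtain N where N: "\<forall>n\<ge>N. \<forall>t\<in>{0..B}. \<bar>poly (qs n) t - g t\<bar> < e"
      using qs e unfolding unif_approx_def by blast
    have "norm (poly_op (qs n) ?F x - cfc (\<lambda>t. g (f t)) P x) \<le> e * norm x" if n: "n \<ge> N" for n
    proof -
      have "poly_op (qs n) ?F x - cfc (\<lambda>t. g (f t)) P x = cfc (\<lambda>t. poly (qs n) (f t) - g (f t)) P x"
        by (simp add: cfc_poly_comp[OF f nn] cfc_diff[OF P cq gf])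
      also have "norm \<dots> \<le> e * norm x"
      proof (rule cfc_norm_le[OF P])
        show "continuous_on {0..onorm P} (\<lambda>t. poly (qs n) (f t) - g (f t))"
          by (intro continuous_on_diff cq gf)
        fix t assume "0 \<le> t" "t \<le> onorm P"
        then have "f t \<in> {0..B}" using nn B by fastforce
        then show "\<bar>poly (qs n) (f t) - g (f t)\<bar> \<le> e" using N n by fastforce
      qed
      finally show ?thesis .
    qed
    moreover have "e * norm x < r"
    proof -
      have q: "norm x / (2 * (norm x + 1)) < 1"
      proof -
        have "norm x < 2 * (norm x + 1)" by (smt (verit) norm_ge_zero)
        then show ?thesis by (simp add: divide_less_eq add_nonneg_pos)
      qed
      have "e * norm x = r * (norm x / (2 * (norm x + 1)))" by (simp add: e_def)
      also have "\<dots> < r * 1" by (rule mult_strict_left_mono[OF q r])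
      finally show ?thesis by simp
    qed
    ultimately show "\<exists>no. \<forall>n\<ge>no. norm (poly_op (qs n) ?F x - cfc (\<lambda>t. g (f t)) P x) < r"
      by (meson le_less_trans)
  qed
  from L1 L2 show ?thesis using LIMSEQ_unique by blast
qed

end

section \<open>Riesz representation and the adjoint\<close>

lemma Re_cinner_swap: "Re (cinner y x) = Re (cinner x (y::'a::complex_inner))"
  by (subst cinner_commute) simp

lemma norm_add_sq: "(norm (a + b))\<^sup>2 = (norm a)\<^sup>2 + (norm b)\<^sup>2 + 2 * Re (cinner a (b::'a::complex_inner))"
  unfolding Re_cinner_self[symmetric] by (simp add: cinner_simps Re_cinner_swap[of a b])

lemma norm_diff_sq: "(norm (a - b))\<^sup>2 = (norm a)\<^sup>2 + (norm b)\<^sup>2 - 2 * Re (cinner a (b::'a::complex_inner))"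
  unfolding Re_cinner_self[symmetric] by (simp add: cinner_simps Re_cinner_swap[of a b])

lemma parallelogram: "(norm (a + b))\<^sup>2 + (norm (a - b))\<^sup>2 = 2 * (norm a)\<^sup>2 + 2 * (norm (b::'a::complex_inner))\<^sup>2"
  by (simp add: norm_add_sq norm_diff_sq)

lemma closest_point_exists:
  fixes K :: "'a::{complex_inner, complete_space} set"
  assumes K: "closed K" "0 \<in> K" "\<And>x y. x \<in> K \<Longrightarrow> y \<in> K \<Longrightarrow> x + y \<in> K"
     "\<And>x r. x \<in> K \<Longrightarrow> r *\<^sub>R x \<in> K"
  shows "\<exists>k\<in>K. \<forall>k'\<in>K. norm (x0 - k) \<le> norm (x0 - k')"
proof -
  define S where "S = (\<lambda>k. norm (x0 - k)) ` K"
  define d where "d = Inf S"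
  have Sne: "S \<noteq> {}" using K(2) by (auto simp: S_def)
  have Sbd: "bdd_below S" unfolding S_def by (rule bdd_belowI[of _ 0]) auto
  have dle: "d \<le> norm (x0 - k)" if "k \<in> K" for k
    unfolding d_def using Sbd that by (auto simp: S_def intro: cInf_lower)
  have d0: "0 \<le> d" unfolding d_def using Sne by (auto simp: S_def intro!: cInf_greatest)
  have "\<exists>k\<in>K. norm (x0 - k) < d + 1 / (real n + 1)" for n
  proof -
    have "Inf S < d + 1 / (real n + 1)" unfolding d_def by simp
    then show ?thesis using cInf_less_iff[OF Sne Sbd] by (auto simp: S_def)
  qed
  then obtain ks where ks: "\<And>n. ks n \<in> K" "\<And>n. norm (x0 - ks n) < d + 1 / (real n + 1)"
    by metis
  have mid: "(1/2) *\<^sub>R (ks n + ks m) \<in> K" for n m using K ks by blast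
  have sq: "(norm (ks n - ks m))\<^sup>2 \<le> 2 * (2 * d + 1) * (1 / (real n + 1) + 1 / (real m + 1))" for n m
  proof -
    define a where "a = x0 - ks n"
    define b where "b = x0 - ks m"
    have ab: "a + b = 2 *\<^sub>R (x0 - (1/2) *\<^sub>R (ks n + ks m))"
      by (simp add: a_def b_def algebra_simps scaleR_add_right scaleR_2)
    have "d \<le> norm (x0 - (1/2) *\<^sub>R (ks n + ks m))" by (rule dle[OF mid])
    then have "(2 * d)\<^sup>2 \<le> (norm (a + b))\<^sup>2"
      unfolding ab by (simp add: power_mono d0 power_mult_distrib)
    note h1 = this
    have e: "ks n - ks m = b - a" by (simp add: a_def b_def)
    have par: "(norm (a + b))\<^sup>2 + (norm (b - a))\<^sup>2 = 2 * (norm a)\<^sup>2 + 2 * (norm b)\<^sup>2"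
      using parallelogram[of a b] by (simp add: norm_minus_commute)
    have na: "(norm a)\<^sup>2 \<le> (d + 1 / (real n + 1))\<^sup>2"
      using ks(2)[of n] unfolding a_def by (intro power_mono) auto
    have nb: "(norm b)\<^sup>2 \<le> (d + 1 / (real m + 1))\<^sup>2"
      using ks(2)[of m] unfolding b_def by (intro power_mono) auto
    have bnd: "(d + 1 / (real n + 1))\<^sup>2 \<le> d\<^sup>2 + (2 * d + 1) * (1 / (real n + 1))" for n
    proof -
      have "1 / (real n + 1) \<le> 1" by simp
      then have "(1 / (real n + 1)) * (1 / (real n + 1)) \<le> (1 / (real n + 1)) * 1"
        by (intro mult_left_mono) auto
      then have "(1 / (real n + 1))\<^sup>2 \<le> 1 / (real n + 1)"
        by (simp only: power2_eq_square mult_1_right)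
      then show ?thesis by (simp add: power2_sum algebra_simps)
    qed
    have d4: "(2 * d)\<^sup>2 = 4 * d\<^sup>2" by (simp add: power_mult_distrib)
    have "(norm (ks n - ks m))\<^sup>2 \<le> 2 * ((2 * d + 1) * (1 / (real n + 1))) + 2 * ((2 * d + 1) * (1 / (real m + 1)))"
      unfolding e using h1 par na nb bnd[of n] bnd[of m] d4 by linarith
    then show ?thesis by (simp add: algebra_simps)
  qed
  have C: "Cauchy ks"
  proof (rule CauchyI)
    fix e :: real assume e: "0 < e"
    obtain N :: nat where N: "real N > 4 * (2 * d + 1) / e\<^sup>2" using reals_Archimedean2 by blast
    show "\<exists>M. \<forall>m\<ge>M. \<forall>n\<ge>M. norm (ks m - ks n) < e"
    proof (intro exI[of _ N] allI impI)
      fix m n assume mn: "N \<le> m" "N \<le> n"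
      have Npos: "real N > 0" using N e d0 by (smt (verit) divide_pos_pos zero_less_power)
      have "1 / (real m + 1) < 1 / real N" "1 / (real n + 1) < 1 / real N"
        using mn Npos by (auto simp: frac_less2)
      then have lt: "1 / (real m + 1) + 1 / (real n + 1) < 2 / real N" by simp
      have cp: "0 < 2 * (2 * d + 1)" using d0 by simp
      have "(norm (ks m - ks n))\<^sup>2 \<le> 2 * (2 * d + 1) * (1 / (real m + 1) + 1 / (real n + 1))"
        by (rule sq)
      also have "\<dots> < 2 * (2 * d + 1) * (2 / real N)" by (rule mult_strict_left_mono[OF lt cp])
      finally have "(norm (ks m - ks n))\<^sup>2 < 2 * (2 * d + 1) * (2 / real N)" .
      also have "2 * (2 * d + 1) * (2 / real N) < e\<^sup>2"
        using N Npos e by (simp add: field_simps)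
      finally show "norm (ks m - ks n) < e" using e by (simp add: power_less_imp_less_base)
    qed
  qed
  then obtain k where k: "ks \<longlonglongrightarrow> k" using Cauchy_convergent_iff convergent_def by blast
  have kK: "k \<in> K" by (rule closed_sequentially[OF K(1) ks(1) k])
  have "norm (x0 - k) \<le> d"
  proof (rule tendsto_le[OF trivial_limit_sequentially])
    show "(\<lambda>n. d + 1 / (real n + 1)) \<longlonglongrightarrow> d"
      using tendsto_add[OF tendsto_const[of d] LIMSEQ_inverse_real_of_nat] by (simp add: inverse_eq_divide add.commute)
    show "(\<lambda>n. norm (x0 - ks n)) \<longlonglongrightarrow> norm (x0 - k)" by (intro tendsto_norm tendsto_diff tendsto_const k)
    show "\<forall>\<^sub>F n in sequentially. norm (x0 - ks n) \<le> d + 1 / (real n + 1)"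
      using ks(2) by (simp add: less_imp_le)
  qed
  then show ?thesis using kK dle by (meson order_trans)
qed

lemma orth_of_min:
  fixes u :: "'a::complex_inner"
  assumes min: "\<And>t. norm u \<le> norm (u - scaleC t w)"
  shows "cinner u w = 0"
proof -
  define a where "a = cinner u w"
  define s where "s = 1 / ((norm w)\<^sup>2 + 1)"
  have wp: "(norm w)\<^sup>2 + 1 > 0" by (smt (verit) zero_le_power2)
  have s: "s > 0" "s * (norm w)\<^sup>2 < 1"
    unfolding s_def using wp by (auto simp: divide_less_eq)
  define t where "t = complex_of_real s * cnj a"
  have "(norm u)\<^sup>2 \<le> (norm (u - scaleC t w))\<^sup>2" using min[of t] by (simp add: power_mono)
  also have "(norm (u - scaleC t w))\<^sup>2 = (norm u)\<^sup>2 - 2 * s * (cmod a)\<^sup>2 + s\<^sup>2 * (cmod a)\<^sup>2 * (norm w)\<^sup>2"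
  proof -
    have "(norm (u - scaleC t w))\<^sup>2 = (norm u)\<^sup>2 + (norm (scaleC t w))\<^sup>2 - 2 * Re (cinner u (scaleC t w))"
      by (rule norm_diff_sq)
    also have "Re (cinner u (scaleC t w)) = s * (cmod a)\<^sup>2"
      by (simp add: cinner_scaleC_right t_def a_def[symmetric] complex_mult_cnj cmod_power2)
         (simp add: algebra_simps power2_eq_square)
    also have "(norm (scaleC t w))\<^sup>2 = s\<^sup>2 * (cmod a)\<^sup>2 * (norm w)\<^sup>2"
      using s by (simp add: norm_scaleC t_def norm_mult power_mult_distrib)
    finally show ?thesis by simp
  qed
  finally have "0 \<le> s * (cmod a)\<^sup>2 * (s * (norm w)\<^sup>2 - 2)"
    by (simp add: algebra_simps power2_eq_square)
  moreover have "s * (norm w)\<^sup>2 - 2 < 0" using s by simp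
  ultimately have "s * (cmod a)\<^sup>2 \<le> 0" by (smt (verit) mult_pos_neg)
  then have "cmod a = 0" using s by (simp add: mult_le_0_iff)
  then show ?thesis by (simp add: a_def)
qed

lemma riesz:
  fixes \<phi> :: "'a::{complex_inner, complete_space} \<Rightarrow> complex"
  assumes bl: "bounded_linear \<phi>" and cl: "\<And>c x. \<phi> (scaleC c x) = c * \<phi> x"
  shows "\<exists>z. \<forall>x. \<phi> x = cinner z x"
proof (cases "\<forall>x. \<phi> x = 0")
  case True then show ?thesis by (intro exI[of _ 0]) simp
next
  case False
  then obtain x0 where x0: "\<phi> x0 \<noteq> 0" by blast
  define K where "K = {x. \<phi> x = 0}"
  have Kc: "closed K" unfolding K_def
    by (rule closed_Collect_eq) (auto intro: linear_continuous_on[OF bl] continuous_on_const)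
  have K0: "0 \<in> K" by (simp add: K_def bl_zero[OF bl])
  have Kadd: "x + y \<in> K" if "x \<in> K" "y \<in> K" for x y using that by (simp add: K_def bl_add[OF bl])
  have KR: "r *\<^sub>R x \<in> K" if "x \<in> K" for x r using that by (simp add: K_def bl_scaleR[OF bl])
  have KC: "scaleC c x \<in> K" if "x \<in> K" for x c using that by (simp add: K_def cl)
  obtain k where kK: "k \<in> K" and kmin: "\<forall>k'\<in>K. norm (x0 - k) \<le> norm (x0 - k')"
    using closest_point_exists[OF Kc K0 Kadd KR] by blast
  define u where "u = x0 - k"
  have \<phi>u: "\<phi> u = \<phi> x0" using kK by (simp add: u_def K_def bl_diff[OF bl])
  have orth: "cinner u w = 0" if "w \<in> K" for w
  proof (rule orth_of_min)
    fix t
    have "k + scaleC t w \<in> K" using kK that KC Kadd by blast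
    then have "norm (x0 - k) \<le> norm (x0 - (k + scaleC t w))" using kmin by blast
    then show "norm u \<le> norm (u - scaleC t w)" by (simp add: u_def algebra_simps)
  qed
  have u0: "u \<noteq> 0" using \<phi>u x0 bl_zero[OF bl] by auto
  have cuu: "cinner u u \<noteq> 0" using u0 by simp
  define z where "z = scaleC (cnj (\<phi> u / cinner u u)) u"
  show ?thesis
  proof (intro exI[of _ z] allI)
    fix x
    have "x - scaleC (\<phi> x / \<phi> u) u \<in> K"
      using x0 \<phi>u by (simp add: K_def bl_diff[OF bl] cl)
    then have "cinner u (x - scaleC (\<phi> x / \<phi> u) u) = 0" by (rule orth)
    then have "cinner u x = \<phi> x / \<phi> u * cinner u u" by (simp add: cinner_diff_right cinner_scaleC_right)
    then show "\<phi> x = cinner z x"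
      using cuu x0 \<phi>u by (simp add: z_def cinner_scaleC_left field_simps)
  qed
qed

lemma adj_exists:
  fixes A :: "'a::{complex_inner, complete_space} \<Rightarrow> 'a"
  assumes A: "bounded_clinear A"
  shows "\<exists>Y. \<forall>x y. cinner (A x) y = cinner x (Y y)"
proof -
  have "\<exists>z. \<forall>x. cinner (A x) y = cinner x z" for y
  proof -
    have bl: "bounded_linear (\<lambda>x. cinner y (A x))"
    proof (rule bounded_linear_intro[where K="norm y * onorm A"])
      show "cinner y (A (x + z)) = cinner y (A x) + cinner y (A z)" for x z
        by (simp add: bl_add[OF bcl_bl[OF A]] cinner_add_right)
      show "cinner y (A (r *\<^sub>R x)) = r *\<^sub>R cinner y (A x)" for r x
        by (simp add: bl_scaleR[OF bcl_bl[OF A]] cinner_scaleR_right scaleR_conv_of_real)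
      show "norm (cinner y (A x)) \<le> norm x * (norm y * onorm A)" for x
      proof -
        have "norm (cinner y (A x)) \<le> norm y * norm (A x)" using Cauchy_Schwarz_c[of y "A x"] by simp
        also have "\<dots> \<le> norm y * (onorm A * norm x)" by (rule mult_left_mono[OF bcl_norm[OF A]]) simp
        finally show ?thesis by (simp add: ac_simps)
      qed
    qed
    obtain z where z: "\<forall>x. cinner y (A x) = cinner z x"
      using riesz[OF bl] by (metis bcl_scaleC[OF A] cinner_scaleC_right)
    show ?thesis
    proof (intro exI[of _ z] allI)
      fix x show "cinner (A x) y = cinner x z"
        using z by (metis cinner_commute)
    qed
  qed
  then show ?thesis by metis
qed

lemma adj_prop:
  fixes A :: "'a::{complex_inner, complete_space} \<Rightarrow> 'a"
  assumes A: "bounded_clinear A"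
  shows "cinner (A x) y = cinner x (adj A y)"
proof -
  obtain Y where Y: "\<forall>x y. cinner (A x) y = cinner x (Y y)" using adj_exists[OF A] by blast
  have "adj A = Y" unfolding adj_def
  proof (rule the_equality)
    show "\<forall>x y. cinner (A x) y = cinner x (Y y)" by (rule Y)
    fix Z assume Z: "\<forall>x y. cinner (A x) y = cinner x (Z y)"
    show "Z = Y"
    proof
      fix y show "Z y = Y y" by (rule cinner_ext) (metis Y Z)
    qed
  qed
  then show ?thesis using Y by simp
qed

lemma adj_prop':
  fixes A :: "'a::{complex_inner, complete_space} \<Rightarrow> 'a"
  assumes A: "bounded_clinear A"
  shows "cinner (adj A y) x = cinner y (A x)"
  by (metis adj_prop[OF A] cinner_commute)

lemma adj_bcl:
  fixes A :: "'a::{complex_inner, complete_space} \<Rightarrow> 'a"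
  assumes A: "bounded_clinear A"
  shows "bounded_clinear (adj A)"
proof -
  have add: "adj A (x + y) = adj A x + adj A y" for x y
    by (rule cinner_ext) (simp add: adj_prop[OF A, symmetric] cinner_add_right)
  have scC: "adj A (scaleC c x) = scaleC c (adj A x)" for c x
    by (rule cinner_ext) (simp add: adj_prop[OF A, symmetric] cinner_scaleC_right)
  have scR: "adj A (r *\<^sub>R x) = r *\<^sub>R adj A x" for r x
    by (simp add: scaleR_scaleC scC)
  have nb: "norm (adj A y) \<le> norm y * onorm A" for y
  proof -
    have "(norm (adj A y))\<^sup>2 = Re (cinner (A (adj A y)) y)"
      by (simp add: adj_prop[OF A] Re_cinner_self)
    also have "\<dots> \<le> norm (A (adj A y)) * norm y" by (rule Re_cinner_le)
    also have "\<dots> \<le> onorm A * norm (adj A y) * norm y"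
      by (rule mult_right_mono[OF bcl_norm[OF A]]) simp
    finally have "norm (adj A y) * norm (adj A y) \<le> (norm y * onorm A) * norm (adj A y)"
      by (simp add: power2_eq_square algebra_simps)
    then show ?thesis
      by (cases "adj A y = 0") (auto simp: bcl_onorm_nonneg[OF A])
  qed
  show ?thesis unfolding bounded_clinear_def
    using bounded_linear_intro[of "adj A", OF add scR nb] scC by blast
qed

lemma adj_adj:
  fixes A :: "'a::{complex_inner, complete_space} \<Rightarrow> 'a"
  assumes A: "bounded_clinear A"
  shows "adj (adj A) = A"
proof
  fix y
  show "adj (adj A) y = A y"
    by (rule cinner_ext) (metis adj_prop[OF adj_bcl[OF A]] adj_prop'[OF A])
qed

lemma pos_adj_comp:
  fixes A :: "'a::{complex_inner, complete_space} \<Rightarrow> 'a"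
  assumes A: "bounded_clinear A"
  shows "pos (adj A \<circ> A)"
  unfolding pos_def
proof (intro conjI allI)
  show "bounded_clinear (adj A \<circ> A)" by (rule bcl_comp'[OF adj_bcl[OF A] A])
  show "selfadj (adj A \<circ> A)" unfolding selfadj_def
    by (simp add: adj_prop[OF A, symmetric] adj_prop'[OF A])
  fix x show "0 \<le> Re (cinner ((adj A \<circ> A) x) x)"
    by (simp add: adj_prop'[OF A] Re_cinner_self)
qed

lemma pos_comp_adj:
  fixes A :: "'a::{complex_inner, complete_space} \<Rightarrow> 'a"
  assumes A: "bounded_clinear A"
  shows "pos (A \<circ> adj A)"
  using pos_adj_comp[OF adj_bcl[OF A]] adj_adj[OF A] by simp

section \<open>Intertwining and the mixed Schwarz inequality\<close>

lemma intertw_poly: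
  fixes A :: "'a::{complex_inner, complete_space} \<Rightarrow> 'a"
  assumes A: "bounded_clinear A"
  shows "A (poly_op p (adj A \<circ> A) z) = poly_op p (A \<circ> adj A) (A z)"
proof (induction p arbitrary: z rule: pCons_induct)
  case 0 then show ?case by (simp add: bl_zero[OF bcl_bl[OF A]])
next
  case (pCons a p)
  have Sl: "bounded_linear (adj A \<circ> A)" by (rule bcl_bl[OF pos_bcl[OF pos_adj_comp[OF A]]])
  have Tl: "bounded_linear (A \<circ> adj A)" by (rule bcl_bl[OF pos_bcl[OF pos_comp_adj[OF A]]])
  show ?case
    unfolding poly_op_pCons[OF Sl] poly_op_pCons[OF Tl] bl_add[OF bcl_bl[OF A]]
        bl_scaleR[OF bcl_bl[OF A]] pCons.IH[symmetric] by simp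
qed

lemma unif_approx_const_poly: "unif_approx (poly q) M (\<lambda>n. q)"
  by (simp add: unif_approx_def)

lemma intertw_cfc:
  fixes A :: "'a::{complex_inner, complete_space} \<Rightarrow> 'a"
  assumes A: "bounded_clinear A" and c: "continuous_on {0..} c"
  shows "A (cfc c (adj A \<circ> A) (adj A y)) = cfc (\<lambda>t. c t * t) (A \<circ> adj A) y"
proof -
  let ?S = "adj A \<circ> A" and ?T = "A \<circ> adj A"
  have S: "pos ?S" by (rule pos_adj_comp[OF A])
  have T: "pos ?T" by (rule pos_comp_adj[OF A])
  define K where "K = max (onorm ?S) (onorm ?T)"
  have K0: "0 \<le> K" using M0[OF S] by (simp add: K_def)
  have cK: "continuous_on {0..K} c" using c by (rule continuous_on_subset) auto
  obtain ps where ps: "unif_approx c K ps" using unif_approx_exists[OF cK K0] by blast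
  have cS: "continuous_on {0..onorm ?S} c" using c by (rule continuous_on_subset) auto
  have cT: "continuous_on {0..onorm ?T} (\<lambda>t. c t * t)"
    by (intro continuous_intros) (rule continuous_on_subset[OF c], auto)
  obtain Bc where Bc: "\<forall>t. 0 \<le> t \<longrightarrow> t \<le> K \<longrightarrow> \<bar>c t\<bar> \<le> Bc"
    using cont_bounded_interval[OF cK] by blast
  have id: "poly [:0,1:] = (\<lambda>t::real. t)" by (simp add: fun_eq_iff)
  have apT: "unif_approx (\<lambda>t. c t * t) K (\<lambda>n. ps n * [:0,1:])"
    using unif_approx_mult[OF ps unif_approx_const_poly[of "[:0,1:]"], of Bc K] Bc
    unfolding id by auto
  have L1: "(\<lambda>n. poly_op (ps n * [:0,1:]) ?T y) \<longlonglongrightarrow> cfc (\<lambda>t. c t * t) ?T y"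
    by (rule cfc_lim[OF T cT unif_approx_mono[OF apT]]) (simp add: K_def)
  have L2: "(\<lambda>n. poly_op (ps n) ?S (adj A y)) \<longlonglongrightarrow> cfc c ?S (adj A y)"
    by (rule cfc_lim[OF S cS unif_approx_mono[OF ps]]) (simp add: K_def)
  have L3: "(\<lambda>n. A (poly_op (ps n) ?S (adj A y))) \<longlonglongrightarrow> A (cfc c ?S (adj A y))"
    by (rule isCont_tendsto_compose[OF _ L2]) (rule linear_continuous_at[OF bcl_bl[OF A]])
  have Tl: "bounded_linear ?T" by (rule bcl_bl[OF pos_bcl[OF T]])
  have "A (poly_op (ps n) ?S (adj A y)) = poly_op (ps n * [:0,1:]) ?T y" for n
    unfolding poly_op_mult[OF Tl] poly_op_X[OF Tl] intertw_poly[OF A] by simp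
  with L1 L3 show ?thesis using LIMSEQ_unique by auto
qed

lemma mixed_schwarz:
  fixes A :: "'a::{complex_inner, complete_space} \<Rightarrow> 'a"
  assumes A: "bounded_clinear A"
    and m: "continuous_on {0..} m" and k: "continuous_on {0..} k"
    and mnn: "\<And>t. 0 \<le> t \<Longrightarrow> 0 \<le> m t" and knn: "\<And>t. 0 \<le> t \<Longrightarrow> 0 \<le> k t"
    and mk: "\<And>t. 0 \<le> t \<Longrightarrow> m t * k t = t"
  shows "(cmod (cinner (A x) y))\<^sup>2 \<le>
     Re (cinner (cfc m (adj A \<circ> A) x) x) * Re (cinner (cfc k (A \<circ> adj A) y) y)"
proof -
  define S where "S = adj A \<circ> A"
  define T where "T = A \<circ> adj A"
  have S: "pos S" unfolding S_def by (rule pos_adj_comp[OF A])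
  have T: "pos T" unfolding T_def by (rule pos_comp_adj[OF A])
  have mS: "continuous_on {0..onorm S} m" using m by (rule continuous_on_subset) auto
  have kT: "continuous_on {0..onorm T} k" using k by (rule continuous_on_subset) auto
  define R where "R = Re (cinner (cfc k T y) y)"
  have R0: "0 \<le> R" unfolding R_def by (rule cfc_Re_nonneg[OF T kT]) (use knn in auto)
  define Q where "Q = Re (cinner (cfc m S x) x)"
  have main: "(cmod (cinner (A x) y))\<^sup>2 \<le> (Q + \<epsilon> * (norm x)\<^sup>2) * R" if eps: "\<epsilon> > 0" for \<epsilon>
  proof -
    define a where "a t = sqrt (m t + \<epsilon>)" for t
    define b where "b t = 1 / sqrt (m t + \<epsilon>)" for t
    have pos\<epsilon>: "0 < m t + \<epsilon>" if "0 \<le> t" for t using mnn[OF that] eps by simp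
    have ca: "continuous_on {0..} a" unfolding a_def by (intro continuous_intros m)
    have cb: "continuous_on {0..} b" unfolding b_def
      by (intro continuous_intros m) (use pos\<epsilon> in fastforce)
    have caS: "continuous_on {0..onorm S} a" using ca by (rule continuous_on_subset) auto
    have cbS: "continuous_on {0..onorm S} b" using cb by (rule continuous_on_subset) auto
    have sa: "selfadj (cfc a S)" by (rule cfc_selfadj[OF S caS])
    have sb: "selfadj (cfc b S)" by (rule cfc_selfadj[OF S cbS])
    have ba: "cfc b S (cfc a S x) = x"
    proof -
      have "cfc b S (cfc a S x) = cfc (\<lambda>t. b t * a t) S x" by (rule cfc_mult[OF S cbS caS, symmetric])
      also have "cfc (\<lambda>t. b t * a t) S = cfc (\<lambda>t. 1) S"
        by (rule cfc_cong[OF S]) (use pos\<epsilon> in \<open>fastforce simp: a_def b_def\<close>)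
      also have "cfc (\<lambda>t. 1) S x = x" using cfc_const[OF S, of 1 x] by (simp only: scaleR_one)
      finally show ?thesis .
    qed
    have "cinner (A x) y = cinner (A (cfc b S (cfc a S x))) y" by (simp add: ba)
    also have "\<dots> = cinner (cfc b S (cfc a S x)) (adj A y)" by (rule adj_prop[OF A])
    also have "\<dots> = cinner (cfc a S x) (cfc b S (adj A y))" using sb unfolding selfadj_def by blast
    finally have e1: "cmod (cinner (A x) y) \<le> norm (cfc a S x) * norm (cfc b S (adj A y))"
      by (simp add: Cauchy_Schwarz_c)
    have na: "(norm (cfc a S x))\<^sup>2 = Q + \<epsilon> * (norm x)\<^sup>2"
    proof -
      have "cinner (cfc a S (cfc a S x)) x = cinner (cfc a S x) (cfc a S x)"
        using sa unfolding selfadj_def by blast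
      then have "(norm (cfc a S x))\<^sup>2 = Re (cinner (cfc a S (cfc a S x)) x)"
        by (simp add: Re_cinner_self)
      also have "cfc a S (cfc a S x) = cfc (\<lambda>t. a t * a t) S x" by (rule cfc_mult[OF S caS caS, symmetric])
      also have "cfc (\<lambda>t. a t * a t) S = cfc (\<lambda>t. m t + \<epsilon>) S"
        by (rule cfc_cong[OF S]) (use pos\<epsilon> in \<open>simp add: a_def less_imp_le\<close>)
      also have "cfc (\<lambda>t. m t + \<epsilon>) S x = cfc m S x + \<epsilon> *\<^sub>R x"
        using cfc_add[OF S mS continuous_on_const, of \<epsilon> x] cfc_const[OF S, of \<epsilon> x] by simp
      finally show ?thesis by (simp add: Q_def cinner_add_left cinner_scaleR_left Re_cinner_self)
    qed
    have nb: "(norm (cfc b S (adj A y)))\<^sup>2 \<le> R"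
    proof -
      have cbb: "continuous_on {0..} (\<lambda>t. b t * b t)" by (intro continuous_intros cb)
      have "cinner (cfc b S (cfc b S (adj A y))) (adj A y) = cinner (cfc b S (adj A y)) (cfc b S (adj A y))"
        using sb unfolding selfadj_def by blast
      then have "(norm (cfc b S (adj A y)))\<^sup>2 = Re (cinner (cfc b S (cfc b S (adj A y))) (adj A y))"
        by (simp add: Re_cinner_self)
      also have "cfc b S (cfc b S (adj A y)) = cfc (\<lambda>t. b t * b t) S (adj A y)"
        by (rule cfc_mult[OF S cbS cbS, symmetric])
      also have "cinner (cfc (\<lambda>t. b t * b t) S (adj A y)) (adj A y) =
          cinner (A (cfc (\<lambda>t. b t * b t) S (adj A y))) y"
        by (rule adj_prop[OF A, symmetric])
      also have "A (cfc (\<lambda>t. b t * b t) S (adj A y)) = cfc (\<lambda>t. b t * b t * t) T y"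
        by (rule intertw_cfc[OF A cbb, folded S_def T_def])
      also have "Re (cinner (cfc (\<lambda>t. b t * b t * t) T y) y) \<le> R"
        unfolding R_def
      proof (rule cfc_mono[OF T])
        have cbT: "continuous_on {0..onorm T} b" using cb by (rule continuous_on_subset) auto
        show "continuous_on {0..onorm T} (\<lambda>t. b t * b t * t)"
          by (intro continuous_intros cbT)
        show "continuous_on {0..onorm T} k" by (rule kT)
        fix t :: real assume t: "0 \<le> t" "t \<le> onorm T"
        have bb: "b t * b t * t = t / (m t + \<epsilon>)"
          using pos\<epsilon>[OF t(1)] by (simp add: b_def)
        show "b t * b t * t \<le> k t"
        proof (cases "m t = 0")
          case True
          then have "t = 0" using mk[OF t(1)] by simp
          then show ?thesis using knn[OF t(1)] bb by simp
        next
          case False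
          then have mp: "m t > 0" using mnn[OF t(1)] by simp
          have "t / (m t + \<epsilon>) \<le> t / m t"
            by (rule divide_left_mono) (use t mp eps in auto)
          also have "t / m t = k t" using mk[OF t(1)] mp by (simp add: field_simps)
          finally show ?thesis using bb by simp
        qed
      qed
      finally show ?thesis .
    qed
    have "(cmod (cinner (A x) y))\<^sup>2 \<le> (norm (cfc a S x) * norm (cfc b S (adj A y)))\<^sup>2"
      by (rule power_mono[OF e1]) simp
    also have "\<dots> = (Q + \<epsilon> * (norm x)\<^sup>2) * (norm (cfc b S (adj A y)))\<^sup>2"
      by (simp add: power_mult_distrib na)
    also have "\<dots> \<le> (Q + \<epsilon> * (norm x)\<^sup>2) * R"
      by (rule mult_left_mono[OF nb]) (metis na zero_le_power2)
    finally show ?thesis .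
  qed
  have "(cmod (cinner (A x) y))\<^sup>2 \<le> Q * R + e" if e: "e > 0" for e
  proof -
    define \<epsilon> where "\<epsilon> = e / ((norm x)\<^sup>2 * R + 1)"
    have d: "0 < (norm x)\<^sup>2 * R + 1" using R0 by (simp add: add_nonneg_pos)
    have eps: "\<epsilon> > 0" using e d by (simp add: \<epsilon>_def)
    have "(cmod (cinner (A x) y))\<^sup>2 \<le> Q * R + \<epsilon> * ((norm x)\<^sup>2 * R)"
      using main[OF eps] by (simp add: algebra_simps)
    also have "\<epsilon> * ((norm x)\<^sup>2 * R) \<le> e"
    proof -
      have "\<epsilon> * ((norm x)\<^sup>2 * R) \<le> \<epsilon> * ((norm x)\<^sup>2 * R + 1)" using eps by simp
      also have "\<dots> = e" using d by (simp add: \<epsilon>_def)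
      finally show ?thesis .
    qed
    finally show ?thesis by simp
  qed
  then have "(cmod (cinner (A x) y))\<^sup>2 \<le> Q * R" by (rule field_le_epsilon)
  then show ?thesis unfolding Q_def R_def S_def T_def .
qed

lemma convex_powr_ge0:
  assumes s: "s \<ge> 1"
  shows "convex_on {0..} (\<lambda>t::real. t powr s)"
proof (rule convex_onI)
  show "convex {0::real..}" by (rule convex_real_interval)
  fix t x y :: real assume t: "0 < t" "t < 1" and x: "x \<in> {0..}" and y: "y \<in> {0..}"
  have s0: "s > 0" using s by simp
  show "((1 - t) *\<^sub>R x + t *\<^sub>R y) powr s \<le> (1 - t) * x powr s + t * y powr s"
  proof (cases "x = 0 \<or> y = 0")
    case True
    then show ?thesis
    proof
      assume x0: "x = 0"
      have "(t * y) powr s = t powr s * y powr s" using t y by (simp add: powr_mult)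
      also have "\<dots> \<le> t * y powr s" by (rule mult_right_mono[OF powr_le_one_le]) (use t s in auto)
      finally show ?thesis using x0 s0 by simp
    next
      assume y0: "y = 0"
      have "((1 - t) * x) powr s = (1 - t) powr s * x powr s" using t x by (simp add: powr_mult)
      also have "\<dots> \<le> (1 - t) * x powr s" by (rule mult_right_mono[OF powr_le_one_le]) (use t s in auto)
      finally show ?thesis using y0 s0 by simp
    qed
  next
    case False
    then have "x \<in> {0<..}" "y \<in> {0<..}" using x y by auto
    then show ?thesis using convex_onD[OF powr_convex[OF s], of t x y] t by simp
  qed
qed

lemma convex_comp_mono:
  fixes h g :: "real \<Rightarrow> real"
  assumes h: "convex_on {0..} h" and hm: "mono_on {0..} h"
    and g: "convex_on {0..} g" and gnn: "\<And>t. 0 \<le> t \<Longrightarrow> 0 \<le> (g t :: real)"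
  shows "convex_on {0..} (\<lambda>t. h (g t :: real))"
proof (rule convex_onI)
  show "convex {0::real..}" by (rule convex_real_interval)
  fix t x y :: real assume t: "0 < t" "t < 1" and x: "x \<in> {0..}" and y: "y \<in> {0..}"
  have xy: "(1 - t) *\<^sub>R x + t *\<^sub>R y \<in> {0..}" using t x y by simp
  have "g ((1 - t) *\<^sub>R x + t *\<^sub>R y) \<le> (1 - t) * g x + t * g y"
    using convex_onD[OF g, of t x y] t x y by simp
  moreover have "0 \<le> g ((1 - t) *\<^sub>R x + t *\<^sub>R y)" using gnn xy by simp
  moreover have "0 \<le> (1 - t) * g x + t * g y" using gnn x y t by simp
  ultimately have "h (g ((1 - t) *\<^sub>R x + t *\<^sub>R y)) \<le> h ((1 - t) * g x + t * g y)"
    using hm unfolding mono_on_def by simp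
  also have "\<dots> \<le> (1 - t) * h (g x) + t * h (g y)"
    using convex_onD[OF h, of t "g x" "g y"] t gnn x y by simp
  finally show "h (g ((1 - t) *\<^sub>R x + t *\<^sub>R y)) \<le> (1 - t) * h (g x) + t * h (g y)" .
qed

lemma convex_mono_cont:
  fixes h :: "real \<Rightarrow> real"
  assumes h: "convex_on {0..} h" and hm: "mono_on {0..} h"
  shows "continuous_on {0..} h"
  unfolding continuous_on_eq_continuous_within
proof
  fix x :: real assume x: "x \<in> {0..}"
  show "continuous (at x within {0..}) h"
  proof (cases "x = 0")
    case False
    then have xp: "x \<in> {0<..}" using x by auto
    have "continuous_on {0<..} h"
      by (rule convex_on_continuous) (auto intro: convex_on_subset[OF h])
    then have "isCont h x" using continuous_on_eq_continuous_at[of "{0<..}" h] xp by simp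
    then show ?thesis by (rule continuous_at_imp_continuous_within)
  next
    case True
    have lim: "((\<lambda>t. (1 - t) * h 0 + t * h 1) \<longlongrightarrow> h 0) (at 0 within {0..})"
      by (rule tendsto_eq_intros) (auto intro!: tendsto_eq_intros)
    have "(h \<longlongrightarrow> h 0) (at 0 within {0..})"
    proof (rule tendsto_sandwich[OF _ _ tendsto_const lim])
      have ev: "\<forall>\<^sub>F t in at (0::real) within {0..}. 0 \<le> t \<and> t \<le> 1"
        unfolding eventually_at by (rule exI[of _ 1]) (auto simp: dist_real_def)
      show "\<forall>\<^sub>F t in at 0 within {0..}. h 0 \<le> h t"
        using ev by eventually_elim (use hm in \<open>auto simp: mono_on_def\<close>)
      show "\<forall>\<^sub>F t in at 0 within {0..}. h t \<le> (1 - t) * h 0 + t * h 1"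
        using ev by eventually_elim (use convex_onD[OF h, of _ 0 1] in auto)
    qed
    then show ?thesis using True by (simp add: continuous_within)
  qed
qed

lemma subgradient:
  fixes \<phi> :: "real \<Rightarrow> real"
  assumes c: "convex_on {0..} \<phi>" and s: "s > 0"
  shows "\<exists>c. \<forall>t\<ge>0. \<phi> s + c * (t - s) \<le> \<phi> t"
proof -
  define sl where "sl u = (\<phi> u - \<phi> s) / (u - s)" for u
  define L where "L = sl ` {0..<s}"
  have Lne: "L \<noteq> {}" using s by (auto simp: L_def)
  have three: "sl u \<le> sl v" if "0 \<le> u" "u < s" "s < v" for u v
  proof -
    have a: "(\<phi> u - \<phi> s) / (u - s) \<le> (\<phi> u - \<phi> v) / (u - v)"
      using convex_on_slope_le(1)[OF c, of u v s] that by auto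
    have b: "(\<phi> u - \<phi> v) / (u - v) \<le> (\<phi> s - \<phi> v) / (s - v)"
      using convex_on_slope_le(2)[OF c, of u v s] that by auto
    have "(\<phi> s - \<phi> v) / (s - v) = sl v" by (simp add: sl_def divide_simps) (simp add: algebra_simps)
    then show ?thesis using a b unfolding sl_def by linarith
  qed
  have Lbd: "bdd_above L" unfolding L_def
    by (rule bdd_aboveI[of _ "sl (s + 1)"]) (use three s in auto)
  define c where "c = Sup L"
  show ?thesis
  proof (intro exI[of _ c] allI impI)
    fix t :: real assume t: "0 \<le> t"
    consider "t < s" | "t = s" | "t > s" by linarith
    then show "\<phi> s + c * (t - s) \<le> \<phi> t"
    proof cases
      case 1
      have "sl t \<le> c" unfolding c_def by (rule cSup_upper[OF _ Lbd]) (use t 1 in \<open>auto simp: L_def\<close>)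
      then have "(\<phi> t - \<phi> s) / (t - s) \<le> c" by (simp add: sl_def)
      then have "c * (t - s) \<le> \<phi> t - \<phi> s" using 1 by (simp add: divide_le_eq mult.commute)
      then show ?thesis by simp
    next
      case 2 then show ?thesis by simp
    next
      case 3
      have "c \<le> sl t" unfolding c_def by (rule cSup_least[OF Lne]) (use three 3 in \<open>auto simp: L_def\<close>)
      then have "c \<le> (\<phi> t - \<phi> s) / (t - s)" by (simp add: sl_def)
      then have "c * (t - s) \<le> \<phi> t - \<phi> s" using 3 by (simp add: le_divide_eq)
      then show ?thesis by simp
    qed
  qed
qed

section \<open>Jensen's operator inequality\<close>

lemma jensen_op:
  fixes F :: "'a::{complex_inner, complete_space} \<Rightarrow> 'a"
  assumes F: "pos F" and \<phi>c: "continuous_on {0..} \<phi>" and cv: "convex_on {0..} \<phi>"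
    and mo: "mono_on {0..} \<phi>" and x: "norm x = 1"
  shows "\<phi> (Re (cinner (F x) x)) \<le> Re (cinner (cfc \<phi> F x) x)"
proof -
  define s where "s = Re (cinner (F x) x)"
  have s0: "0 \<le> s" unfolding s_def by (rule pos_nonneg[OF F])
  have sM: "s \<le> onorm F" using Re_cinner_op_le[OF pos_bcl[OF F], of x] x by (simp add: s_def)
  have \<phi>F: "continuous_on {0..onorm F} \<phi>" using \<phi>c by (rule continuous_on_subset) auto
  show ?thesis
  proof (cases "s = 0")
    case True
    have "Re (cinner (cfc (\<lambda>t. \<phi> 0) F x) x) \<le> Re (cinner (cfc \<phi> F x) x)"
      by (rule cfc_mono[OF F continuous_on_const \<phi>F]) (use mo in \<open>auto simp: mono_on_def\<close>)
    then show ?thesis using True x by (simp add: cfc_const[OF F] cinner_scaleR_left Re_cinner_self s_def)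
  next
    case False
    then have sp: "s > 0" using s0 by simp
    obtain c where c: "\<forall>t\<ge>0. \<phi> s + c * (t - s) \<le> \<phi> t" using subgradient[OF cv sp] by blast
    define u where "u = [:\<phi> s - c * s, c:]"
    have pu: "poly u t = \<phi> s + c * (t - s)" for t by (simp add: u_def algebra_simps)
    have "Re (cinner (cfc (poly u) F x) x) \<le> Re (cinner (cfc \<phi> F x) x)"
      by (rule cfc_mono[OF F continuous_on_poly[OF continuous_on_id] \<phi>F]) (use c in \<open>simp add: pu\<close>)
    moreover have "Re (cinner (cfc (poly u) F x) x) = \<phi> s"
    proof -
      have Fl: "bounded_linear F" by (rule bcl_bl[OF pos_bcl[OF F]])
      have e: "cfc (poly u) F x = (\<phi> s - c * s) *\<^sub>R x + c *\<^sub>R F x"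
        by (simp add: cfc_poly[OF F] u_def poly_op_pCons[OF Fl] bl_scaleR[OF Fl] bl_add[OF Fl] bl_zero[OF Fl])
      show ?thesis unfolding e cinner_add_left cinner_scaleR_left
        using x by (simp add: Re_cinner_self s_def[symmetric])
    qed
    ultimately show ?thesis by (simp add: s_def)
  qed
qed

section \<open>Assembling the estimate for a single operator\<close>

lemma cont_powr_ge0: "s > 0 \<Longrightarrow> continuous_on {0..} (\<lambda>t::real. t powr s)"
  by (rule continuous_on_powr') (auto intro: continuous_intros)

lemma sq_powr: "0 \<le> (y::real) \<Longrightarrow> (y\<^sup>2) powr (s / 2) = y powr s"
proof -
  assume y: "0 \<le> y"
  show ?thesis
  proof (cases "y = 0")
    case True then show ?thesis by simp
  next
    case False
    then have yp: "y > 0" using y by simp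
    have e: "y\<^sup>2 = y powr 2" using yp by (simp add: powr_realpow)
    show ?thesis unfolding e powr_powr by simp
  qed
qed

lemma mono_h_powr:
  fixes h :: "real \<Rightarrow> real"
  assumes hm: "mono_on {0..} h" and c: "c > 0"
  shows "mono_on {0..} (\<lambda>t. h (t powr c))"
proof (rule mono_onI)
  fix a b :: real assume "a \<in> {0..}" "b \<in> {0..}" "a \<le> b"
  then have "a powr c \<le> b powr c" using c by (intro powr_mono2) auto
  then show "h (a powr c) \<le> h (b powr c)" using hm unfolding mono_on_def by simp
qed

lemma cfc_chain:
  fixes S :: "'a::{complex_inner, complete_space} \<Rightarrow> 'a"
  assumes S: "pos S" and f: "continuous_on {0..} f" and fnn: "\<And>t. 0 \<le> t \<Longrightarrow> 0 \<le> f t"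
    and s: "s > 0" and h: "continuous_on {0..} h"
  shows "cfc h (cfc (\<lambda>t. t powr s) (cfc f (cfc sqrt S))) = cfc (\<lambda>t. h (f (sqrt t) powr s)) S"
proof -
  have sqS: "continuous_on {0..onorm S} sqrt" by (intro continuous_intros)
  have e1: "cfc f (cfc sqrt S) = cfc (\<lambda>t. f (sqrt t)) S"
    by (rule ext, rule cfc_comp[OF S sqS _ f]) simp
  have fsq: "continuous_on {0..onorm S} (\<lambda>t. f (sqrt t))"
    by (rule continuous_on_compose2[OF f]) (auto intro: continuous_intros)
  have e2: "cfc (\<lambda>t. t powr s) (cfc (\<lambda>t. f (sqrt t)) S) = cfc (\<lambda>t. f (sqrt t) powr s) S"
    by (rule ext, rule cfc_comp[OF S fsq _ cont_powr_ge0[OF s]]) (simp add: fnn)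
  have fps: "continuous_on {0..onorm S} (\<lambda>t. f (sqrt t) powr s)"
    by (rule continuous_on_compose2[OF cont_powr_ge0[OF s] fsq]) (auto simp: fnn)
  have e3: "cfc h (cfc (\<lambda>t. f (sqrt t) powr s) S) = cfc (\<lambda>t. h (f (sqrt t) powr s)) S"
    by (rule ext, rule cfc_comp[OF S fps _ h]) simp
  show ?thesis unfolding e1 e2 e3 ..
qed

lemma jensen_part:
  fixes S :: "'a::{complex_inner, complete_space} \<Rightarrow> 'a"
  assumes S: "pos S" and f: "continuous_on {0..} f" and fnn: "\<And>t. 0 \<le> t \<Longrightarrow> 0 \<le> f t"
    and s: "s \<ge> 2" and h: "continuous_on {0..} h" and hm: "mono_on {0..} h"
    and hc: "convex_on {0..} h" and x: "norm x = 1"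
  shows "h ((Re (cinner (cfc (\<lambda>t. (f (sqrt t))\<^sup>2) S x) x)) powr (s / 2))
     \<le> Re (cinner (cfc (\<lambda>t. h (f (sqrt t) powr s)) S x) x)"
proof -
  let ?m = "\<lambda>t. (f (sqrt t))\<^sup>2"
  let ?\<phi> = "\<lambda>t. h (t powr (s / 2))"
  have s2: "s / 2 > 0" "s / 2 \<ge> 1" using s by auto
  have mc: "continuous_on {0..onorm S} ?m"
    by (intro continuous_intros, rule continuous_on_compose2[OF f]) (auto intro: continuous_intros)
  have F: "pos (cfc ?m S)" by (rule cfc_pos[OF S mc]) simp
  have \<phi>c: "continuous_on {0..} ?\<phi>"
    by (rule continuous_on_compose2[OF h cont_powr_ge0[OF s2(1)]]) auto
  have \<phi>cv: "convex_on {0..} ?\<phi>"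
    by (rule convex_comp_mono[OF hc hm convex_powr_ge0[OF s2(2)]]) simp
  have \<phi>m: "mono_on {0..} ?\<phi>" by (rule mono_h_powr[OF hm s2(1)])
  have "?\<phi> (Re (cinner (cfc ?m S x) x)) \<le> Re (cinner (cfc ?\<phi> (cfc ?m S) x) x)"
    by (rule jensen_op[OF F \<phi>c \<phi>cv \<phi>m x])
  also have "cfc ?\<phi> (cfc ?m S) x = cfc (\<lambda>t. ?\<phi> (?m t)) S x"
    by (rule cfc_comp[OF S mc _ \<phi>c]) simp
  also have "cfc (\<lambda>t. ?\<phi> (?m t)) S = cfc (\<lambda>t. h (f (sqrt t) powr s)) S"
    by (rule cfc_cong[OF S]) (simp add: sq_powr fnn)
  finally show ?thesis .
qed

lemma block_bound:
  fixes A :: "'a::{complex_inner, complete_space} \<Rightarrow> 'a"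
    and f g h :: "real \<Rightarrow> real"
  assumes A: "bounded_clinear A"
    and f_cont: "continuous_on {0..} f" and g_cont: "continuous_on {0..} g"
    and f_nn: "\<forall>t\<ge>0. f t \<ge> 0" and g_nn: "\<forall>t\<ge>0. g t \<ge> 0"
    and fg: "\<forall>t\<ge>0. f t * g t = t"
    and p: "p > 1" and q: "q > 1" and pq: "1 / p + 1 / q = 1"
    and r: "r > 0" and rpq: "r * min p q \<ge> 2"
    and h_nn: "\<forall>t\<ge>0. h t \<ge> 0"
    and h_mono: "mono_on {0..} h"
    and h_convex: "convex_on {0..} h"
    and x: "norm x = 1"
  shows "h ((cmod (cinner (A x) x)) powr r) \<le> onorm (\<lambda>x. (1 / p) *\<^sub>R cfc h (fpow_abs f (p * r) A) x
                       + (1 / q) *\<^sub>R cfc h (fpow_abs g (q * r) (adj A)) x)"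
proof -
  define S where "S = adj A \<circ> A"
  define T where "T = A \<circ> adj A"
  have S: "pos S" unfolding S_def by (rule pos_adj_comp[OF A])
  have T: "pos T" unfolding T_def by (rule pos_comp_adj[OF A])
  have hc: "continuous_on {0..} h" by (rule convex_mono_cont[OF h_convex h_mono])
  have pr: "p * r > 0" "q * r > 0" using p q r by auto
  have "r * min p q \<le> r * p" "r * min p q \<le> r * q" using r by (auto intro: mult_left_mono)
  then have pr2: "p * r \<ge> 2" "q * r \<ge> 2" using rpq by (auto simp: mult.commute)
  define FA where "FA = cfc (\<lambda>t. h (f (sqrt t) powr (p * r))) S"
  define GA where "GA = cfc (\<lambda>t. h (g (sqrt t) powr (q * r))) T"
  have eF: "cfc h (fpow_abs f (p * r) A) = FA"
    unfolding FA_def fpow_abs_def absop_def S_def[symmetric]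
    by (rule cfc_chain[OF S f_cont _ pr(1) hc]) (use f_nn in auto)
  have eG: "cfc h (fpow_abs g (q * r) (adj A)) = GA"
    unfolding GA_def fpow_abs_def absop_def adj_adj[OF A] T_def[symmetric]
    by (rule cfc_chain[OF T g_cont _ pr(2) hc]) (use g_nn in auto)
  have cF: "continuous_on {0..onorm S} (\<lambda>t. h (f (sqrt t) powr (p * r)))"
    by (rule continuous_on_compose2[OF hc continuous_on_compose2[OF cont_powr_ge0[OF pr(1)]
          continuous_on_compose2[OF f_cont]]]) (auto intro: continuous_intros simp: f_nn)
  have cG: "continuous_on {0..onorm T} (\<lambda>t. h (g (sqrt t) powr (q * r)))"
    by (rule continuous_on_compose2[OF hc continuous_on_compose2[OF cont_powr_ge0[OF pr(2)]
          continuous_on_compose2[OF g_cont]]]) (auto intro: continuous_intros simp: g_nn)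
  have FAl: "bounded_linear FA" unfolding FA_def by (rule cfc_bl[OF S cF])
  have GAl: "bounded_linear GA" unfolding GA_def by (rule cfc_bl[OF T cG])
  define Z where "Z = (\<lambda>x. (1 / p) *\<^sub>R FA x + (1 / q) *\<^sub>R GA x)"
  have Zl: "bounded_linear Z" unfolding Z_def
    by (intro bounded_linear_add bounded_linear_compose[OF bounded_linear_scaleR_right] FAl GAl)
  define m where "m t = (f (sqrt t))\<^sup>2" for t
  define k where "k t = (g (sqrt t))\<^sup>2" for t
  have mc: "continuous_on {0..} m" unfolding m_def
    by (intro continuous_intros, rule continuous_on_compose2[OF f_cont]) (auto intro: continuous_intros)
  have kc: "continuous_on {0..} k" unfolding k_def
    by (intro continuous_intros, rule continuous_on_compose2[OF g_cont]) (auto intro: continuous_intros)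
  have mk: "m t * k t = t" if "0 \<le> t" for t
  proof -
    have "m t * k t = (f (sqrt t) * g (sqrt t))\<^sup>2" by (simp add: m_def k_def power_mult_distrib)
    also have "\<dots> = t" using fg that by simp
    finally show ?thesis .
  qed
  define a where "a = Re (cinner (cfc m S x) x)"
  define b where "b = Re (cinner (cfc k T x) x)"
  have ms: "(cmod (cinner (A x) x))\<^sup>2 \<le> a * b"
    unfolding a_def b_def S_def T_def
    by (rule mixed_schwarz[OF A mc kc]) (auto simp: m_def k_def mk[unfolded m_def k_def])
  have mS: "continuous_on {0..onorm S} m" using mc by (rule continuous_on_subset) auto
  have kT: "continuous_on {0..onorm T} k" using kc by (rule continuous_on_subset) auto
  have a0: "0 \<le> a" unfolding a_def by (rule cfc_Re_nonneg[OF S mS]) (simp add: m_def)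
  have b0: "0 \<le> b" unfolding b_def by (rule cfc_Re_nonneg[OF T kT]) (simp add: k_def)
  define w where "w = cmod (cinner (A x) x)"
  have w0: "0 \<le> w" by (simp add: w_def)
  have wr: "w powr r \<le> a powr (r / 2) * b powr (r / 2)"
  proof -
    have "w powr r = (w\<^sup>2) powr (r / 2)" using sq_powr[OF w0, of r] by simp
    also have "\<dots> \<le> (a * b) powr (r / 2)"
      by (rule powr_mono2) (use r ms in \<open>auto simp: w_def\<close>)
    also have "\<dots> = a powr (r / 2) * b powr (r / 2)" using a0 b0 by (simp add: powr_mult)
    finally show ?thesis .
  qed
  define \<alpha> where "\<alpha> = a powr (p * r / 2)"
  define \<beta> where "\<beta> = b powr (q * r / 2)"
  have \<alpha>0: "0 \<le> \<alpha>" and \<beta>0: "0 \<le> \<beta>" by (simp_all add: \<alpha>_def \<beta>_def)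
  have young: "a powr (r / 2) * b powr (r / 2) \<le> (1 / p) * \<alpha> + (1 / q) * \<beta>"
  proof -
    have "a powr (r / 2) * b powr (r / 2) \<le> (a powr (r / 2)) powr p / p + (b powr (r / 2)) powr q / q"
      by (rule Youngs_inequality[OF p q pq]) simp_all
    also have "(a powr (r / 2)) powr p = \<alpha>" by (simp add: \<alpha>_def powr_powr mult.commute)
    also have "(b powr (r / 2)) powr q = \<beta>" by (simp add: \<beta>_def powr_powr mult.commute)
    finally show ?thesis by simp
  qed
  have cvx: "h ((1 / p) * \<alpha> + (1 / q) * \<beta>) \<le> (1 / p) * h \<alpha> + (1 / q) * h \<beta>"
  proof -
    have t: "0 \<le> 1 / q" "1 / q \<le> 1" using q by auto
    have "h ((1 - 1 / q) *\<^sub>R \<alpha> + (1 / q) *\<^sub>R \<beta>) \<le> (1 - 1 / q) * h \<alpha> + (1 / q) * h \<beta>"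
      by (rule convex_onD[OF h_convex t]) (use \<alpha>0 \<beta>0 in auto)
    moreover have "1 - 1 / q = 1 / p" using pq by simp
    ultimately show ?thesis by simp
  qed
  have step1: "h (w powr r) \<le> (1 / p) * h \<alpha> + (1 / q) * h \<beta>"
  proof -
    have "w powr r \<le> (1 / p) * \<alpha> + (1 / q) * \<beta>" using wr young by linarith
    moreover have "0 \<le> (1 / p) * \<alpha> + (1 / q) * \<beta>" using \<alpha>0 \<beta>0 p q by simp
    ultimately have "h (w powr r) \<le> h ((1 / p) * \<alpha> + (1 / q) * \<beta>)"
      using h_mono unfolding mono_on_def by simp
    then show ?thesis using cvx by linarith
  qed
  have jA: "h \<alpha> \<le> Re (cinner (FA x) x)"
    unfolding \<alpha>_def a_def FA_def m_def
    using jensen_part[OF S f_cont _ pr2(1) hc h_mono h_convex x] f_nn by (simp add: mult.commute)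
  have jB: "h \<beta> \<le> Re (cinner (GA x) x)"
    unfolding \<beta>_def b_def GA_def k_def
    using jensen_part[OF T g_cont _ pr2(2) hc h_mono h_convex x] g_nn by (simp add: mult.commute)
  have "h (w powr r) \<le> (1 / p) * Re (cinner (FA x) x) + (1 / q) * Re (cinner (GA x) x)"
    using step1 jA jB p q by (smt (verit) divide_pos_pos mult_left_mono)
  also have "\<dots> = Re (cinner (Z x) x)"
    by (simp add: Z_def cinner_add_left cinner_scaleR_left)
  also have "\<dots> \<le> norm (Z x) * norm x" by (rule Re_cinner_le)
  also have "\<dots> \<le> onorm Z" using onorm[OF Zl, of x] x by simp
  finally show ?thesis unfolding w_def Z_def eF eG .
qed

lemma cinner_normalize:
  fixes A :: "'a::complex_inner \<Rightarrow> 'a"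
  assumes A: "bounded_clinear A" and x: "x \<noteq> 0"
  shows "cmod (cinner (A x) x) = (norm x)\<^sup>2 * cmod (cinner (A ((1 / norm x) *\<^sub>R x)) ((1 / norm x) *\<^sub>R x))"
    and "norm ((1 / norm x) *\<^sub>R x) = 1"
proof -
  have "cinner (A ((1 / norm x) *\<^sub>R x)) ((1 / norm x) *\<^sub>R x) = of_real ((1 / norm x)\<^sup>2) * cinner (A x) x"
    by (simp add: bl_scaleR[OF bcl_bl[OF A]] cinner_scaleR_left cinner_scaleR_right power2_eq_square)
  then show "cmod (cinner (A x) x) = (norm x)\<^sup>2 * cmod (cinner (A ((1 / norm x) *\<^sub>R x)) ((1 / norm x) *\<^sub>R x))"
    using x by (simp add: norm_mult norm_divide power2_eq_square)
  show "norm ((1 / norm x) *\<^sub>R x) = 1" using x by simp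
qed

theorem theorem3p8:
  fixes A D :: "'a::{complex_inner, complete_space} \<Rightarrow> 'a"
    and f g h :: "real \<Rightarrow> real"
    and p q r :: real
  assumes nontriv: "\<exists>x::'a. x \<noteq> 0"
    and A: "bounded_clinear A" and D: "bounded_clinear D"
    and f_cont: "continuous_on {0..} f" and g_cont: "continuous_on {0..} g"
    and f_nn: "\<forall>t\<ge>0. f t \<ge> 0" and g_nn: "\<forall>t\<ge>0. g t \<ge> 0"
    and fg: "\<forall>t\<ge>0. f t * g t = t"
    and p: "p > 1" and q: "q > 1" and pq: "1 / p + 1 / q = 1"
    and r: "r > 0" and rpq: "r * min p q \<ge> 2"
    and h_nn: "\<forall>t\<ge>0. h t \<ge> 0"
    and h_mono: "mono_on {0..} h"
    and h_convex: "convex_on {0..} h"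
  shows "h (numerical_radius (diag_op A D) powr r)
    \<le> max (onorm (\<lambda>x. (1 / p) *\<^sub>R cfc h (fpow_abs f (p * r) A) x
                       + (1 / q) *\<^sub>R cfc h (fpow_abs g (q * r) (adj A)) x))
          (onorm (\<lambda>x. (1 / p) *\<^sub>R cfc h (fpow_abs f (p * r) D) x
                       + (1 / q) *\<^sub>R cfc h (fpow_abs g (q * r) (adj D)) x))"
proof -
  define RA where "RA = onorm (\<lambda>x. (1 / p) *\<^sub>R cfc h (fpow_abs f (p * r) A) x
                       + (1 / q) *\<^sub>R cfc h (fpow_abs g (q * r) (adj A)) x)"
  define RD where "RD = onorm (\<lambda>x. (1 / p) *\<^sub>R cfc h (fpow_abs f (p * r) D) x
                       + (1 / q) *\<^sub>R cfc h (fpow_abs g (q * r) (adj D)) x)"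
  have BA: "h ((cmod (cinner (A x) x)) powr r) \<le> RA" if "norm x = 1" for x
    unfolding RA_def
    by (rule block_bound[OF A f_cont g_cont f_nn g_nn fg p q pq r rpq h_nn h_mono h_convex that])
  have BD: "h ((cmod (cinner (D x) x)) powr r) \<le> RD" if "norm x = 1" for x
    unfolding RD_def
    by (rule block_bound[OF D f_cont g_cont f_nn g_nn fg p q pq r rpq h_nn h_mono h_convex that])
  define \<psi> where "\<psi> t = h ((max t 0) powr r)" for t
  have hc: "continuous_on {0..} h" by (rule convex_mono_cont[OF h_convex h_mono])
  have \<psi>mono: "mono \<psi>"
  proof (rule monoI)
    fix a b :: real assume "a \<le> b"
    then have "(max a 0) powr r \<le> (max b 0) powr r" using r by (intro powr_mono2) auto
    then show "\<psi> a \<le> \<psi> b" using h_mono unfolding \<psi>_def mono_on_def by simp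
  qed
  have \<psi>cont: "continuous_on UNIV \<psi>" unfolding \<psi>_def
    by (rule continuous_on_compose2[OF hc continuous_on_compose2[OF cont_powr_ge0[OF r]]])
       (auto intro: continuous_intros)
  have \<psi>eq: "\<psi> t = h (t powr r)" if "t \<ge> 0" for t using that unfolding \<psi>_def by (simp add: max_def)
  from nontriv obtain u :: 'a where u: "u \<noteq> 0" by (elim exE)
  define u0 where "u0 = (1 / norm u) *\<^sub>R u"
  have u0: "norm u0 = 1" using u by (simp add: u0_def)
  have \<psi>0: "\<psi> 0 \<le> RA" "\<psi> 0 \<le> RD"
  proof -
    have "\<psi> 0 \<le> \<psi> (cmod (cinner (A u0) u0))" "\<psi> 0 \<le> \<psi> (cmod (cinner (D u0) u0))"
      using \<psi>mono by (auto simp: mono_def)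
    then show "\<psi> 0 \<le> RA" "\<psi> 0 \<le> RD" using BA[OF u0] BD[OF u0] by (auto simp: \<psi>eq)
  qed
  define \<alpha> where "\<alpha> x = (if x = 0 then 0 else cmod (cinner (A ((1 / norm x) *\<^sub>R x)) ((1 / norm x) *\<^sub>R x)))" for x
  define \<beta> where "\<beta> x = (if x = 0 then 0 else cmod (cinner (D ((1 / norm x) *\<^sub>R x)) ((1 / norm x) *\<^sub>R x)))" for x
  have \<alpha>all: "cmod (cinner (A x) x) = (norm x)\<^sup>2 * \<alpha> x \<and> 0 \<le> \<alpha> x \<and> \<psi> (\<alpha> x) \<le> RA \<and> \<alpha> x \<le> onorm A" for x
  proof (cases "x = 0")
    case True
    then show "cmod (cinner (A x) x) = (norm x)\<^sup>2 * \<alpha> x \<and> 0 \<le> \<alpha> x \<and> \<psi> (\<alpha> x) \<le> RA \<and> \<alpha> x \<le> onorm A"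
      using \<psi>0 bcl_onorm_nonneg[OF A] by (simp add: \<alpha>_def)
  next
    case False
    let ?y = "(1 / norm x) *\<^sub>R x"
    have n: "norm ?y = 1" by (rule cinner_normalize(2)[OF A False])
    have e: "\<alpha> x = cmod (cinner (A ?y) ?y)" using False by (simp add: \<alpha>_def)
    have "\<psi> (\<alpha> x) = h ((\<alpha> x) powr r)" by (rule \<psi>eq) (simp add: e)
    also have "\<dots> \<le> RA" unfolding e by (rule BA[OF n])
    finally have 3: "\<psi> (\<alpha> x) \<le> RA" .
    have 4: "\<alpha> x \<le> onorm A" using cmod_cinner_op_le[OF A, of ?y] n by (simp add: e)
    show "cmod (cinner (A x) x) = (norm x)\<^sup>2 * \<alpha> x \<and> 0 \<le> \<alpha> x \<and> \<psi> (\<alpha> x) \<le> RA \<and> \<alpha> x \<le> onorm A"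
      using cinner_normalize(1)[OF A False] 3 4 by (simp add: e)
  qed
  have \<alpha>: "cmod (cinner (A x) x) = (norm x)\<^sup>2 * \<alpha> x" "0 \<le> \<alpha> x" "\<psi> (\<alpha> x) \<le> RA" "\<alpha> x \<le> onorm A" for x
    using \<alpha>all[of x] by blast+
  have \<beta>all: "cmod (cinner (D x) x) = (norm x)\<^sup>2 * \<beta> x \<and> 0 \<le> \<beta> x \<and> \<psi> (\<beta> x) \<le> RD \<and> \<beta> x \<le> onorm D" for x
  proof (cases "x = 0")
    case True
    then show "cmod (cinner (D x) x) = (norm x)\<^sup>2 * \<beta> x \<and> 0 \<le> \<beta> x \<and> \<psi> (\<beta> x) \<le> RD \<and> \<beta> x \<le> onorm D"
      using \<psi>0 bcl_onorm_nonneg[OF D] by (simp add: \<beta>_def)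
  next
    case False
    let ?y = "(1 / norm x) *\<^sub>R x"
    have n: "norm ?y = 1" by (rule cinner_normalize(2)[OF D False])
    have e: "\<beta> x = cmod (cinner (D ?y) ?y)" using False by (simp add: \<beta>_def)
    have "\<psi> (\<beta> x) = h ((\<beta> x) powr r)" by (rule \<psi>eq) (simp add: e)
    also have "\<dots> \<le> RD" unfolding e by (rule BD[OF n])
    finally have 3: "\<psi> (\<beta> x) \<le> RD" .
    have 4: "\<beta> x \<le> onorm D" using cmod_cinner_op_le[OF D, of ?y] n by (simp add: e)
    show "cmod (cinner (D x) x) = (norm x)\<^sup>2 * \<beta> x \<and> 0 \<le> \<beta> x \<and> \<psi> (\<beta> x) \<le> RD \<and> \<beta> x \<le> onorm D"
      using cinner_normalize(1)[OF D False] 3 4 by (simp add: e)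
  qed
  have \<beta>: "cmod (cinner (D x) x) = (norm x)\<^sup>2 * \<beta> x" "0 \<le> \<beta> x" "\<psi> (\<beta> x) \<le> RD" "\<beta> x \<le> onorm D" for x
    using \<beta>all[of x] by blast+
  define V where "V = {cmod (cinner (diag_op A D z) z) | z. norm z = 1}"
  have Vbound: "v \<le> max (\<alpha> x) (\<beta> y)" if "norm (x, y) = 1" "v = cmod (cinner (diag_op A D (x, y)) (x, y))" for v x y
  proof -
    have n1: "(norm x)\<^sup>2 + (norm y)\<^sup>2 = 1" using that(1) by (simp add: norm_prod_def)
    have "v = cmod (cinner (A x) x + cinner (D y) y)"
      using that(2) by (simp add: diag_op_def cinner_prod_def)
    also have "\<dots> \<le> cmod (cinner (A x) x) + cmod (cinner (D y) y)" by (rule norm_triangle_ineq)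
    also have "\<dots> = (norm x)\<^sup>2 * \<alpha> x + (norm y)\<^sup>2 * \<beta> y" by (simp add: \<alpha>(1) \<beta>(1))
    also have "\<dots> \<le> (norm x)\<^sup>2 * max (\<alpha> x) (\<beta> y) + (norm y)\<^sup>2 * max (\<alpha> x) (\<beta> y)"
      by (intro add_mono mult_left_mono) auto
    also have "\<dots> = max (\<alpha> x) (\<beta> y)" using n1 by (simp add: distrib_right[symmetric])
    finally show ?thesis .
  qed
  have V\<psi>: "\<psi> v \<le> max RA RD" if vV: "v \<in> V" for v
  proof -
    obtain z where z: "norm z = 1" "v = cmod (cinner (diag_op A D z) z)"
      using vV unfolding V_def by blast
    define x where "x = fst z"
    define y where "y = snd z"
    have xy: "norm (x, y) = 1" "v = cmod (cinner (diag_op A D (x, y)) (x, y))"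
      using z by (simp_all add: x_def y_def)
    have "\<psi> v \<le> \<psi> (max (\<alpha> x) (\<beta> y))" using \<psi>mono Vbound[OF xy] by (auto simp: mono_def)
    also have "\<dots> \<le> max RA RD"
    proof (cases "\<alpha> x \<le> \<beta> y")
      case True then show ?thesis using \<beta>(3)[of y] by (simp add: max.absorb2 le_max_iff_disj)
    next
      case False then show ?thesis using \<alpha>(3)[of x] by (simp add: max.absorb1 le_max_iff_disj)
    qed
    finally show ?thesis .
  qed
  have Vne: "V \<noteq> {}"
  proof -
    have "norm (u0, 0::'a) = 1" using u0 by (simp add: norm_prod_def)
    then show ?thesis unfolding V_def by blast
  qed
  have Vbdd: "bdd_above V"
  proof (rule bdd_aboveI[of _ "max (onorm A) (onorm D)"])
    fix v assume "v \<in> V"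
    then obtain z where z: "norm z = 1" "v = cmod (cinner (diag_op A D z) z)"
      unfolding V_def by blast
    define x where "x = fst z"
    define y where "y = snd z"
    have xy: "norm (x, y) = 1" "v = cmod (cinner (diag_op A D (x, y)) (x, y))"
      using z by (simp_all add: x_def y_def)
    show "v \<le> max (onorm A) (onorm D)" using Vbound[OF xy] \<alpha>(4)[of x] \<beta>(4)[of y] by linarith
  qed
  have V0: "0 \<le> Sup V"
  proof -
    obtain v where "v \<in> V" using Vne by blast
    moreover have "0 \<le> v" using \<open>v \<in> V\<close> unfolding V_def by auto
    ultimately show ?thesis using cSup_upper[OF _ Vbdd] by (meson order_trans)
  qed
  have nr: "numerical_radius (diag_op A D) = Sup V"
    unfolding numerical_radius_def V_def ..
  have "\<psi> (Sup V) = (SUP v\<in>V. \<psi> v)"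
  proof (rule continuous_at_Sup_mono[OF \<psi>mono _ Vne Vbdd])
    have "isCont \<psi> (Sup V)" using \<psi>cont continuous_on_eq_continuous_at[of UNIV \<psi>] by simp
    then show "continuous (at_left (Sup V)) \<psi>" by (rule continuous_at_imp_continuous_within)
  qed
  also have "\<dots> \<le> max RA RD" by (rule cSUP_least[OF Vne V\<psi>])
  finally show ?thesis unfolding nr RA_def[symmetric] RD_def[symmetric] using \<psi>eq[OF V0] by simp
qed

end
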